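(* Let $a$ be a weak composition of length $n$ that is not identically zero. Then $\lim_{m\to\infty}\mathcal{G}^{(1)}_{0^m a}=\tilde{L}_{\mathtt{flat}(a)}(x_1,x_2,\dots)$, in the sense that for every monomial $x^c$ in finitely many variables, the coefficient of $x^c$ in $\mathcal{G}^{(1)}_{0^m a}(x_1,\dots,x_{m+n})$ equals its coefficient in $\tilde{L}_{\mathtt{flat}(a)}$ for all sufficiently large $m$.
   Context: $0^m a$ denotes the weak composition obtained by prepending $m$ zeros to $a$. Glide polynomials: a weak komposition is a weak composition whose positive entries are colored black or red, $\mathrm{ex}(b)$ = number of red entries, $\mathtt{flat}(a)$ = sequence of nonzero entries of $a$. For $a$ of length $N$ with nonzero entries exactly at positions $n_1<\dots<n_\ell$, a weak komposition $b$ of length $N$ is a glide of $a$ if there exist $0=i_0<\dots<i_\ell$ with $i_j\le n_j$, $b_k=0$ for $k>i_\ell$, and for each $j$: $b_{i_{j-1}+1}+\dots+b_{i_j}=\mathtt{flat}(a)_j+\#\{\text{red entries among } b_{i_{j-1}+1},\dots,b_{i_j}\}$ and the first nonzero entry among them is black. $\mathcal{G}^{(\beta)}_a(x_1,\dots,x_N)=\sum_b\beta^{\mathrm{ex}(b)}x^b$ over glides $b$ of $a$; $\mathcal{G}^{(1)}$ is the specialization $\beta=1$. Multi-fundamental quasisymmetric functions (Lam–Pylyavskyy): for nonempty finite $S,S'\subset\mathbb{Z}_{>0}$ write $S<S'$ if $\max S<\min S'$ and $S\le S'$ if $\max S\le\min S'$. For a composition $\alpha$ with $|\alpha|=N$,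 let $\tilde{A}_\alpha$ be the set of sequences $\sigma=(S_1,\dots,S_N)$ of nonempty finite subsets of $\mathbb{Z}_{>0}$ such that $S_i<S_{i+1}$ if $i=\alpha_1+\dots+\alpha_k$ for some $k$, and $S_i\le S_{i+1}$ otherwise. $\mathrm{wt}(\sigma)_k$ is the number of indices $i$ with $k\in S_i$, and $\tilde{L}_\alpha=\sum_{\sigma\in\tilde A_\alpha}x^{\mathrm{wt}(\sigma)}$, a formal power series in $x_1,x_2,\dots$. *)

theory Defs
  imports Main
begin

text \<open>Weak compositions are lists of naturals; entry k (1-based) is the exponent of x_k.
  Weak kompositions are lists of pairs (value, red?); zero entries must be uncoloured (False).\<close>

definition flat :: "nat list \<Rightarrow> nat list" where
  "flat a = filter (\<lambda>x. x \<noteq> 0) a"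

definition nzpos :: "nat list \<Rightarrow> nat list" where
  "nzpos a = filter (\<lambda>k. a ! (k - 1) \<noteq> 0) [1..<length a + 1]"

definition bval :: "(nat \<times> bool) list \<Rightarrow> nat \<Rightarrow> nat" where
  "bval b k = fst (b ! (k - 1))"
definition bred :: "(nat \<times> bool) list \<Rightarrow> nat \<Rightarrow> bool" where
  "bred b k = snd (b ! (k - 1))"

definition is_wkomp :: "(nat \<times> bool) list \<Rightarrow> bool" where
  "is_wkomp b \<longleftrightarrow> (\<forall>k<length b. fst (b ! k) = 0 \<longrightarrow> \<not> snd (b ! k))"

definition ex :: "(nat \<times> bool) list \<Rightarrow> nat" where
  "ex b = card {k. 1 \<le> k \<and> k \<le> length b \<and> bval b k \<noteq> 0 \<and> bred b k}"

definition is_glide :: "nat list \<Rightarrow> (nat \<times> bool) list \<Rightarrow> bool" where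
  "is_glide a b \<longleftrightarrow> is_wkomp b \<and> length b = length a \<and>
    (let l = length (flat a) in
     \<exists>i :: nat \<Rightarrow> nat. i 0 = 0 \<and> (\<forall>j<l. i j < i (Suc j)) \<and>
       (\<forall>j\<in>{1..l}. i j \<le> nzpos a ! (j - 1)) \<and>
       (\<forall>k. i l < k \<and> k \<le> length b \<longrightarrow> bval b k = 0) \<and>
       (\<forall>j\<in>{1..l}.
          (\<Sum>k\<in>{i (j - 1)<..i j}. bval b k)
            = flat a ! (j - 1) + card {k\<in>{i (j - 1)<..i j}. bval b k \<noteq> 0 \<and> bred b k} \<and>
          (\<forall>k\<in>{i (j - 1)<..i j}. bval b k \<noteq> 0 \<and> (\<forall>k'\<in>{i (j - 1)<..<k}. bval b k' = 0)
               \<longrightarrow> \<not> bred b k)))"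

text \<open>Exponent vector of x^b (variables x_1, x_2, ...; index 0 unused).\<close>
definition mono_of :: "(nat \<times> bool) list \<Rightarrow> nat \<Rightarrow> nat" where
  "mono_of b k = (if 1 \<le> k \<and> k \<le> length b then bval b k else 0)"

text \<open>Coefficient of x^c in the glide polynomial G^(beta)_a(x_1,...,x_N), N = length a.\<close>
definition glide_coeff :: "'r::comm_semiring_1 \<Rightarrow> nat list \<Rightarrow> (nat \<Rightarrow> nat) \<Rightarrow> 'r" where
  "glide_coeff \<beta> a c = (\<Sum>b\<in>{b. is_glide a b \<and> mono_of b = c}. \<beta> ^ ex b)"

text \<open>Multi-fundamental quasisymmetric function \<tilde>L_alpha: sequences of nonempty finite
  subsets of positive integers.\<close>
definition Atilde :: "nat list \<Rightarrow> nat set list set" where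
  "Atilde \<alpha> = {\<sigma>. length \<sigma> = sum_list \<alpha> \<and>
     (\<forall>S\<in>set \<sigma>. S \<noteq> {} \<and> finite S \<and> 0 \<notin> S) \<and>
     (\<forall>i. 1 \<le> i \<and> i < length \<sigma> \<longrightarrow>
        (if (\<exists>k. 1 \<le> k \<and> k \<le> length \<alpha> \<and> i = sum_list (take k \<alpha>))
         then Max (\<sigma> ! (i - 1)) < Min (\<sigma> ! i)
         else Max (\<sigma> ! (i - 1)) \<le> Min (\<sigma> ! i)))}"

definition wt :: "nat set list \<Rightarrow> nat \<Rightarrow> nat" where
  "wt \<sigma> k = card {i. i < length \<sigma> \<and> k \<in> \<sigma> ! i}"

definition Ltilde_coeff :: "nat list \<Rightarrow> (nat \<Rightarrow> nat) \<Rightarrow> nat" where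
  "Ltilde_coeff \<alpha> c = card {\<sigma>\<in>Atilde \<alpha>. wt \<sigma> = c}"

end

theory Submission
  imports Defs
begin

definition bd :: "nat list \<Rightarrow> nat \<Rightarrow> bool" where
  "bd \<alpha> i \<longleftrightarrow> (\<exists>k. 1 \<le> k \<and> k \<le> length \<alpha> \<and> i = sum_list (take k \<alpha>))"

fun dec :: "nat list \<Rightarrow> nat list" where
  "dec [] = []"
| "dec (a # r) = (if a \<le> 1 then r else (a - 1) # r)"

definition pos :: "nat list \<Rightarrow> bool" where "pos \<alpha> \<longleftrightarrow> (\<forall>x\<in>set \<alpha>. 0 < x)"

lemma pos_dec: "pos \<alpha> \<Longrightarrow> pos (dec \<alpha>)"
  by (cases \<alpha>) (auto simp: pos_def)

lemma sum_dec: "pos \<alpha> \<Longrightarrow> \<alpha> \<noteq> [] \<Longrightarrow> sum_list (dec \<alpha>) = sum_list \<alpha> - 1"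
  by (cases \<alpha>) (auto simp: pos_def)

lemma bd_one: "pos (a # r) \<Longrightarrow> bd (a # r) 1 \<longleftrightarrow> a = 1"
proof
  assume p: "pos (a # r)" and "bd (a # r) 1"
  then obtain k where k: "1 \<le> k" "k \<le> length (a#r)" "1 = sum_list (take k (a # r))"
    unfolding bd_def by blast
  then obtain k' where "k = Suc k'" by (cases k) auto
  then have "1 = a + sum_list (take k' r)" using k by simp
  moreover have "0 < a" using p by (simp add: pos_def)
  ultimately show "a = 1" by linarith
next
  assume "a = 1" then show "bd (a # r) 1" unfolding bd_def by (rule_tac x=1 in exI) auto
qed

lemma bd_Suc: "pos (a # r) \<Longrightarrow> 1 \<le> i \<Longrightarrow> bd (a # r) (Suc i) \<longleftrightarrow> bd (dec (a # r)) i"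
proof (cases "a \<le> 1")
  case True
  assume p: "pos (a # r)" and i: "1 \<le> i"
  with True have a1: "a = 1" by (auto simp: pos_def)
  show ?thesis
  proof
    assume "bd (a # r) (Suc i)"
    then obtain k where k: "1 \<le> k" "k \<le> length (a#r)" "Suc i = sum_list (take k (a # r))"
      unfolding bd_def by blast
    then obtain k' where kk: "k = Suc k'" by (cases k) auto
    with k a1 i have "k' \<ge> 1" by (cases k') auto
    with k kk a1 show "bd (dec (a # r)) i" unfolding bd_def by (rule_tac x=k' in exI) auto
  next
    assume "bd (dec (a # r)) i"
    then obtain k where k: "1 \<le> k" "k \<le> length r" "i = sum_list (take k r)"
      unfolding bd_def using a1 by auto
    then show "bd (a # r) (Suc i)" unfolding bd_def using a1 by (rule_tac x="Suc k" in exI) auto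
  qed
next
  case False
  assume p: "pos (a # r)"
  show ?thesis
  proof
    assume "bd (a # r) (Suc i)"
    then obtain k where k: "1 \<le> k" "k \<le> length (a#r)" "Suc i = sum_list (take k (a # r))"
      unfolding bd_def by blast
    then obtain k' where kk: "k = Suc k'" by (cases k) auto
    with k False show "bd (dec (a # r)) i" unfolding bd_def by (rule_tac x=k in exI) auto
  next
    assume "bd (dec (a # r)) i"
    then obtain k where k: "1 \<le> k" "k \<le> length ((a-1)#r)" "i = sum_list (take k ((a-1)#r))"
      unfolding bd_def using False by auto
    then obtain k' where kk: "k = Suc k'" by (cases k) auto
    with k False show "bd (a # r) (Suc i)" unfolding bd_def by (rule_tac x=k in exI) auto
  qed
qed

definition good :: "nat set \<Rightarrow> bool" where "good S \<longleftrightarrow> S \<noteq> {} \<and> finite S \<and> 0 \<notin> S"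

lemma Atilde_alt: "Atilde \<alpha> = {\<sigma>. length \<sigma> = sum_list \<alpha> \<and> (\<forall>S\<in>set \<sigma>. good S) \<and>
     (\<forall>i. 1 \<le> i \<and> i < length \<sigma> \<longrightarrow>
        (if bd \<alpha> i then Max (\<sigma> ! (i - 1)) < Min (\<sigma> ! i) else Max (\<sigma> ! (i - 1)) \<le> Min (\<sigma> ! i)))}"
  unfolding Atilde_def bd_def good_def by auto

lemma Atilde_Nil: "Atilde [] = {[]}"
  unfolding Atilde_alt by auto

lemma Atilde_Cons:
  assumes p: "pos (a # r)"
  shows "S # \<sigma> \<in> Atilde (a # r) \<longleftrightarrow> good S \<and> \<sigma> \<in> Atilde (dec (a # r)) \<and>
     (\<sigma> \<noteq> [] \<longrightarrow> (if a = 1 then Max S < Min (hd \<sigma>) else Max S \<le> Min (hd \<sigma>)))"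
proof -
  have len: "length (S # \<sigma>) = sum_list (a # r) \<longleftrightarrow> length \<sigma> = sum_list (dec (a # r))"
    using p by (auto simp: pos_def)
  have ord: "(\<forall>i. 1 \<le> i \<and> i < length (S#\<sigma>) \<longrightarrow>
        (if bd (a#r) i then Max ((S#\<sigma>) ! (i - 1)) < Min ((S#\<sigma>) ! i) else Max ((S#\<sigma>) ! (i - 1)) \<le> Min ((S#\<sigma>) ! i)))
     \<longleftrightarrow> (\<sigma> \<noteq> [] \<longrightarrow> (if a = 1 then Max S < Min (hd \<sigma>) else Max S \<le> Min (hd \<sigma>))) \<and>
       (\<forall>i. 1 \<le> i \<and> i < length \<sigma> \<longrightarrow>
        (if bd (dec (a#r)) i then Max (\<sigma> ! (i - 1)) < Min (\<sigma> ! i) else Max (\<sigma> ! (i - 1)) \<le> Min (\<sigma> ! i)))"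
    (is "?L \<longleftrightarrow> ?A \<and> ?B")
  proof
    assume L: ?L
    have "?A"
    proof
      assume "\<sigma> \<noteq> []"
      then have "1 < length (S#\<sigma>)" by simp
      with L[rule_format, of 1] show "(if a = 1 then Max S < Min (hd \<sigma>) else Max S \<le> Min (hd \<sigma>))"
        using bd_one[OF p] \<open>\<sigma> \<noteq> []\<close> by (auto simp: hd_conv_nth split: if_splits)
    qed
    moreover have "?B"
    proof (intro allI impI)
      fix i assume i: "1 \<le> i \<and> i < length \<sigma>"
      then have "1 \<le> Suc i \<and> Suc i < length (S#\<sigma>)" by simp
      from L[rule_format, OF this] i bd_Suc[OF p, of i]
      show "(if bd (dec (a#r)) i then Max (\<sigma> ! (i - 1)) < Min (\<sigma> ! i) else Max (\<sigma> ! (i - 1)) \<le> Min (\<sigma> ! i))"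
        by (cases i) auto
    qed
    ultimately show "?A \<and> ?B" ..
  next
    assume AB: "?A \<and> ?B"
    show ?L
    proof (intro allI impI)
      fix i assume i: "1 \<le> i \<and> i < length (S#\<sigma>)"
      show "(if bd (a#r) i then Max ((S#\<sigma>) ! (i - 1)) < Min ((S#\<sigma>) ! i) else Max ((S#\<sigma>) ! (i - 1)) \<le> Min ((S#\<sigma>) ! i))"
      proof (cases "i = 1")
        case True
        with i have "\<sigma> \<noteq> []" by auto
        with AB True bd_one[OF p] show ?thesis by (cases \<sigma>) (auto split: if_splits)
      next
        case False
        with i obtain i' where ii: "i = Suc i'" "1 \<le> i'" "i' < length \<sigma>" by (cases i) auto
        with AB bd_Suc[OF p ii(2)] show ?thesis by (cases i') auto
      qed
    qed
  qed
  show ?thesis unfolding Atilde_alt using len ord by auto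
qed

lemma Atilde_le: "\<sigma> \<in> Atilde \<alpha> \<Longrightarrow> Suc i < length \<sigma> \<Longrightarrow> Max (\<sigma> ! i) \<le> Min (\<sigma> ! Suc i)"
  unfolding Atilde_alt by (auto split: if_splits dest!: spec[of _ "Suc i"])

lemma Atilde_good: "\<sigma> \<in> Atilde \<alpha> \<Longrightarrow> i < length \<sigma> \<Longrightarrow> good (\<sigma> ! i)"
  unfolding Atilde_alt by auto

lemma Atilde_chain: "\<sigma> \<in> Atilde \<alpha> \<Longrightarrow> i < j \<Longrightarrow> j < length \<sigma> \<Longrightarrow> Max (\<sigma> ! i) \<le> Min (\<sigma> ! j)"
proof (induction j)
  case 0 then show ?case by simp
next
  case (Suc j)
  show ?case
  proof (cases "i = j")
    case True with Suc show ?thesis using Atilde_le by blast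
  next
    case False
    then have "i < j" using Suc by simp
    with Suc have "Max (\<sigma> ! i) \<le> Min (\<sigma> ! j)" by simp
    moreover have "Min (\<sigma> ! j) \<le> Max (\<sigma> ! j)"
    proof -
      have "good (\<sigma> ! j)" using Atilde_good Suc.prems by simp
      then show ?thesis unfolding good_def by (meson Max_in Min_le)
    qed
    moreover have "Max (\<sigma> ! j) \<le> Min (\<sigma> ! Suc j)" using Atilde_le Suc.prems by blast
    ultimately show ?thesis by linarith
  qed
qed

lemma Atilde_elem: "\<sigma> \<in> Atilde \<alpha> \<Longrightarrow> i < j \<Longrightarrow> j < length \<sigma> \<Longrightarrow> x \<in> \<sigma> ! i \<Longrightarrow> y \<in> \<sigma> ! j \<Longrightarrow> x \<le> y"
proof -
  assume as: "\<sigma> \<in> Atilde \<alpha>" "i < j" "j < length \<sigma>" "x \<in> \<sigma> ! i" "y \<in> \<sigma> ! j"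
  have g1: "good (\<sigma> ! i)" "good (\<sigma> ! j)" using as Atilde_good by auto
  have "x \<le> Max (\<sigma> ! i)" using g1 as by (simp add: good_def)
  also have "\<dots> \<le> Min (\<sigma> ! j)" using Atilde_chain as by blast
  also have "\<dots> \<le> y" using g1 as by (simp add: good_def)
  finally show ?thesis .
qed

lemma wt_alt: "wt \<sigma> k = length (filter (\<lambda>S. k \<in> S) \<sigma>)"
  unfolding wt_def by (simp add: length_filter_conv_card)

lemma wt_Nil[simp]: "wt [] k = 0" by (simp add: wt_alt)
lemma wt_Cons[simp]: "wt (S # \<sigma>) k = (if k \<in> S then 1 else 0) + wt \<sigma> k" by (simp add: wt_alt)
lemma wt_pos_iff: "0 < wt \<sigma> k \<longleftrightarrow> (\<exists>S\<in>set \<sigma>. k \<in> S)"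
  unfolding wt_alt by (induct \<sigma>) auto

definition supp :: "(nat \<Rightarrow> nat) \<Rightarrow> nat set" where "supp c = {k. c k \<noteq> 0}"

definition Tset :: "nat list \<Rightarrow> (nat \<Rightarrow> nat) \<Rightarrow> nat set list set" where
  "Tset \<alpha> c = {\<sigma>\<in>Atilde \<alpha>. wt \<sigma> = c}"

lemma Tset_supp: "\<sigma> \<in> Tset \<alpha> c \<Longrightarrow> S \<in> set \<sigma> \<Longrightarrow> x \<in> S \<Longrightarrow> c x \<noteq> 0"
  unfolding Tset_def using wt_pos_iff[of \<sigma> x] by auto

lemma finite_Tset: "finite (supp c) \<Longrightarrow> finite (Tset \<alpha> c)"
proof -
  assume f: "finite (supp c)"
  have "Tset \<alpha> c \<subseteq> {\<sigma>. set \<sigma> \<subseteq> Pow (supp c) \<and> length \<sigma> = sum_list \<alpha>}"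
  proof
    fix \<sigma> assume s: "\<sigma> \<in> Tset \<alpha> c"
    then have "length \<sigma> = sum_list \<alpha>" by (simp add: Tset_def Atilde_def)
    moreover have "set \<sigma> \<subseteq> Pow (supp c)" using Tset_supp[OF s] by (auto simp: supp_def)
    ultimately show "\<sigma> \<in> {\<sigma>. set \<sigma> \<subseteq> Pow (supp c) \<and> length \<sigma> = sum_list \<alpha>}" by simp
  qed
  moreover have "finite {\<sigma>. set \<sigma> \<subseteq> Pow (supp c) \<and> length \<sigma> = sum_list \<alpha>}"
    using f by (intro finite_lists_length_eq) auto
  ultimately show ?thesis by (rule finite_subset)
qed

lemma Tset_Nil: "Tset [] c = (if c = (\<lambda>_. 0) then {[]} else {})"
  unfolding Tset_def Atilde_Nil by (auto simp: fun_eq_iff)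

lemma Tset_zero: "pos \<alpha> \<Longrightarrow> \<alpha> \<noteq> [] \<Longrightarrow> Tset \<alpha> (\<lambda>_. 0) = {}"
proof (rule ccontr)
  assume p: "pos \<alpha>" "\<alpha> \<noteq> []" and "Tset \<alpha> (\<lambda>_. 0) \<noteq> {}"
  then obtain \<sigma> where s: "\<sigma> \<in> Tset \<alpha> (\<lambda>_. 0)" by auto
  from p have "sum_list \<alpha> > 0" by (cases \<alpha>) (auto simp: pos_def)
  moreover have "length \<sigma> = sum_list \<alpha>" using s by (simp add: Tset_def Atilde_def)
  ultimately have "\<sigma> \<noteq> []" by (metis length_0_conv less_irrefl)
  then obtain S \<sigma>' where e: "\<sigma> = S # \<sigma>'" by (cases \<sigma>) auto
  have "good S" using s e Atilde_good[of \<sigma> \<alpha> 0] by (auto simp: Tset_def)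
  then obtain x where "x \<in> S" by (auto simp: good_def)
  with Tset_supp[OF s, of S x] e show False by simp
qed

lemma Tset_nonempty: "\<sigma> \<in> Tset (a # r) c \<Longrightarrow> pos (a # r) \<Longrightarrow> \<sigma> \<noteq> []"
proof -
  assume "\<sigma> \<in> Tset (a # r) c" "pos (a # r)"
  then have "length \<sigma> = sum_list (a # r)" "a > 0" by (auto simp: Tset_def Atilde_def pos_def)
  then show ?thesis by auto
qed

locale K1 =
  fixes c :: "nat \<Rightarrow> nat"
  assumes c0: "c 0 = 0" and fin: "finite (supp c)" and ne: "supp c \<noteq> {}"
begin

definition k1 where "k1 = Min (supp c)"

lemma k1_supp: "c k1 \<noteq> 0" using Min_in[OF fin ne] by (simp add: k1_def supp_def)
lemma k1_min: "c x \<noteq> 0 \<Longrightarrow> k1 \<le> x" using Min_le[OF fin] by (simp add: k1_def supp_def)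
lemma k1_pos: "0 < k1" using k1_supp c0 by (cases k1) auto

lemma hd_k1:
  assumes s: "\<sigma> \<in> Tset (a # r) c" and p: "pos (a # r)"
  obtains S \<sigma>' where "\<sigma> = S # \<sigma>'" "k1 \<in> S" "good S"
    "\<And>x. x \<in> S \<Longrightarrow> k1 \<le> x" "\<And>x. x \<in> S \<Longrightarrow> c x \<noteq> 0"
proof -
  obtain S \<sigma>' where e: "\<sigma> = S # \<sigma>'" using Tset_nonempty[OF s p] by (cases \<sigma>) auto
  have A: "\<sigma> \<in> Atilde (a # r)" and w: "wt \<sigma> = c" using s by (auto simp: Tset_def)
  have g: "good S" using Atilde_good[OF A, of 0] e by simp
  have sx: "\<And>x. x \<in> S \<Longrightarrow> c x \<noteq> 0" using Tset_supp[OF s] e by auto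
  have "k1 \<in> S"
  proof (rule ccontr)
    assume nk: "k1 \<notin> S"
    have "0 < wt \<sigma> k1" using w k1_supp by simp
    then obtain T where T: "T \<in> set \<sigma>" "k1 \<in> T" using wt_pos_iff by blast
    then obtain j where j: "j < length \<sigma>" "\<sigma> ! j = T" by (auto simp: in_set_conv_nth)
    with nk e T have "0 < j" by (cases j) auto
    from g obtain x where x: "x \<in> S" by (auto simp: good_def)
    have "x \<le> k1" using Atilde_elem[OF A \<open>0<j\<close> j(1), of x k1] x j T e by simp
    moreover have "k1 \<le> x" using k1_min sx x by blast
    ultimately show False using x nk by simp
  qed
  then show ?thesis using that e g sx k1_min by blast
qed

definition cm where "cm = c(k1 := c k1 - 1)"

lemma Tset_ge2:
  assumes p: "pos (a # r)" and c2: "2 \<le> c k1"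
  shows "Tset (a # r) c = (if a = 1 then {} else Cons {k1} ` Tset ((a - 1) # r) cm)"
proof -
  have sub: "\<sigma> \<in> Cons {k1} ` Tset ((a - 1) # r) cm \<and> a \<noteq> 1" if s: "\<sigma> \<in> Tset (a # r) c" for \<sigma>
  proof -
    obtain S \<sigma>' where e: "\<sigma> = S # \<sigma>'" and kS: "k1 \<in> S" and g: "good S"
      and ge: "\<And>x. x \<in> S \<Longrightarrow> k1 \<le> x" using hd_k1[OF s p] by metis
    have A: "\<sigma> \<in> Atilde (a # r)" and w: "wt \<sigma> = c" using s by (auto simp: Tset_def)
    have "wt \<sigma>' k1 \<ge> 1" using w c2 e kS by (auto dest: fun_cong[of _ _ k1])
    then obtain T where T: "T \<in> set \<sigma>'" "k1 \<in> T" using wt_pos_iff[of \<sigma>' k1] by auto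
    then obtain q where q: "q < length \<sigma>'" "\<sigma>' ! q = T" by (auto simp: in_set_conv_nth)
    have le: "x \<le> k1" if "x \<in> S" for x
      using Atilde_elem[OF A, of 0 "Suc q" x k1] q T e that by simp
    have Sk: "S = {k1}" using le ge kS by (auto intro: antisym)
    have A': "\<sigma>' \<in> Atilde (dec (a # r))" and cond: "\<sigma>' \<noteq> [] \<longrightarrow> (if a = 1 then Max S < Min (hd \<sigma>') else Max S \<le> Min (hd \<sigma>'))"
      using A e Atilde_Cons[OF p] by auto
    have a1: "a \<noteq> 1"
    proof
      assume "a = 1"
      have ne': "\<sigma>' \<noteq> []" using T by auto
      with cond \<open>a = 1\<close> Sk have lt: "k1 < Min (hd \<sigma>')" by simp
      have gh: "good (hd \<sigma>')" using Atilde_good[OF A, of 1] e ne' by (cases \<sigma>') auto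
      have "Min (hd \<sigma>') \<le> k1"
      proof (cases q)
        case 0 then show ?thesis using q T ne' gh by (cases \<sigma>') (auto simp: good_def)
      next
        case (Suc q')
        have "Min (hd \<sigma>') \<in> hd \<sigma>'" using gh by (simp add: good_def)
        then show ?thesis using Atilde_elem[OF A, of 1 "Suc q" "Min (hd \<sigma>')" k1] q T e ne' Suc
          by (cases \<sigma>') auto
      qed
      with lt show False by simp
    qed
    have "a \<ge> 1" using p by (simp add: pos_def)
    with a1 have da: "dec (a # r) = (a - 1) # r" by simp
    have "wt \<sigma>' x = cm x" for x using fun_cong[OF w, of x] e Sk by (auto simp: cm_def)
    then have "wt \<sigma>' = cm" by auto
    then have "\<sigma>' \<in> Tset ((a - 1) # r) cm" using A' da by (simp add: Tset_def)
    then show ?thesis using e Sk a1 by auto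
  qed
  have sup: "{k1} # \<sigma>' \<in> Tset (a # r) c" if s: "\<sigma>' \<in> Tset ((a - 1) # r) cm" and a1: "a \<noteq> 1" for \<sigma>'
  proof -
    have "a \<ge> 1" using p by (simp add: pos_def)
    with a1 have da: "dec (a # r) = (a - 1) # r" by simp
    have A': "\<sigma>' \<in> Atilde ((a-1) # r)" and w: "wt \<sigma>' = cm" using s by (auto simp: Tset_def)
    have "good {k1}" using k1_pos by (simp add: good_def)
    moreover have "\<sigma>' \<noteq> [] \<longrightarrow> k1 \<le> Min (hd \<sigma>')"
    proof
      assume ne': "\<sigma>' \<noteq> []"
      have gh: "good (hd \<sigma>')" using Atilde_good[OF A', of 0] ne' by (cases \<sigma>') auto
      then have "Min (hd \<sigma>') \<in> hd \<sigma>'" by (simp add: good_def)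
      then have "cm (Min (hd \<sigma>')) \<noteq> 0" using Tset_supp[OF s, of "hd \<sigma>'"] ne' by auto
      then have "c (Min (hd \<sigma>')) \<noteq> 0" by (auto simp: cm_def split: if_splits)
      then show "k1 \<le> Min (hd \<sigma>')" by (rule k1_min)
    qed
    ultimately have "{k1} # \<sigma>' \<in> Atilde (a # r)" using Atilde_Cons[OF p] A' da a1 by auto
    moreover have "wt ({k1} # \<sigma>') = c" using w c2 by (auto simp: cm_def fun_eq_iff)
    ultimately show ?thesis by (simp add: Tset_def)
  qed
  show ?thesis using sub sup by auto
qed

definition cz where "cz = c(k1 := 0)"

lemma Tset_1:
  assumes p: "pos (a # r)" and c1: "c k1 = 1"
  shows "Tset (a # r) c = Cons {k1} ` Tset (dec (a # r)) cz \<union>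
           (\<lambda>\<tau>. insert k1 (hd \<tau>) # tl \<tau>) ` Tset (a # r) cz"
proof -
  have czs: "cz x \<noteq> 0 \<Longrightarrow> k1 < x" for x using k1_min[of x] by (auto simp: cz_def split: if_splits)
  have sub: "\<sigma> \<in> Cons {k1} ` Tset (dec (a # r)) cz \<union> (\<lambda>\<tau>. insert k1 (hd \<tau>) # tl \<tau>) ` Tset (a # r) cz"
    if s: "\<sigma> \<in> Tset (a # r) c" for \<sigma>
  proof -
    obtain S \<sigma>' where e: "\<sigma> = S # \<sigma>'" and kS: "k1 \<in> S" and g: "good S"
      and ge: "\<And>x. x \<in> S \<Longrightarrow> k1 \<le> x" and sx: "\<And>x. x \<in> S \<Longrightarrow> c x \<noteq> 0" using hd_k1[OF s p] by metis
    have A: "\<sigma> \<in> Atilde (a # r)" and w: "wt \<sigma> = c" using s by (auto simp: Tset_def)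
    have A': "\<sigma>' \<in> Atilde (dec (a # r))" and cond: "\<sigma>' \<noteq> [] \<longrightarrow> (if a = 1 then Max S < Min (hd \<sigma>') else Max S \<le> Min (hd \<sigma>'))"
      using A e Atilde_Cons[OF p] by auto
    have "wt \<sigma>' k1 = 0" using w c1 e kS by (auto dest: fun_cong[of _ _ k1])
    have wx: "wt \<sigma> x = (if x \<in> S then 1 else 0) + wt \<sigma>' x" for x using e by simp
    show ?thesis
    proof (cases "S = {k1}")
      case True
      have "wt \<sigma>' x = cz x" for x
      proof (cases "x = k1")
        case True then show ?thesis using \<open>wt \<sigma>' k1 = 0\<close> by (simp add: cz_def)
      next
        case False
        have "wt \<sigma> x = c x" using w by simp
        then show ?thesis using wx[of x] False \<open>S = {k1}\<close> by (simp add: cz_def)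
      qed
      then have w': "wt \<sigma>' = cz" by auto
      have "\<sigma>' \<in> Tset (dec (a # r)) cz" using A' w' by (simp add: Tset_def)
      then have "\<sigma> \<in> Cons {k1} ` Tset (dec (a # r)) cz" using e True by blast
      then show ?thesis by (rule UnI1)
    next
      case False
      define X where "X = S - {k1}"
      have XsubS: "X \<subseteq> S" and kX: "k1 \<notin> X" by (auto simp: X_def)
      have XS: "S = insert k1 X" using kS unfolding X_def by blast
      have Xne: "X \<noteq> {}" using False XS by blast
      have gX: "good X" using g Xne XsubS finite_subset by (auto simp: good_def)
      have MX: "Max X = Max S"
      proof -
        obtain y where y: "y \<in> X" using Xne by auto
        have yS: "y \<in> S" using y XsubS by blast
        have "y \<noteq> k1" using y kX by blast
        then have "k1 < y" using ge[OF yS] by simp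
        have fX: "finite X" using gX by (simp add: good_def)
        have "Max S = max k1 (Max X)" using XS fX Xne by (simp add: Max_insert)
        moreover have "y \<le> Max X" using fX y by simp
        ultimately show ?thesis using \<open>k1 < y\<close> by simp
      qed
      have "X # \<sigma>' \<in> Atilde (a # r)" using Atilde_Cons[OF p] A' cond gX MX by auto
      moreover have "wt (X # \<sigma>') x = cz x" for x
      proof (cases "x = k1")
        case True then show ?thesis using \<open>wt \<sigma>' k1 = 0\<close> kX by (simp add: cz_def)
      next
        case False
        have "wt \<sigma> x = c x" using w by simp
        then show ?thesis using wx[of x] False XS by (cases "x \<in> X") (simp_all add: cz_def)
      qed
      then have "wt (X # \<sigma>') = cz" by auto
      ultimately have "X # \<sigma>' \<in> Tset (a # r) cz" by (simp add: Tset_def)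
      moreover have "\<sigma> = insert k1 (hd (X # \<sigma>')) # tl (X # \<sigma>')" using e XS by (simp only: list.sel)
      ultimately show ?thesis by blast
    qed
  qed
  have sup1: "{k1} # \<sigma>' \<in> Tset (a # r) c" if s: "\<sigma>' \<in> Tset (dec (a # r)) cz" for \<sigma>'
  proof -
    have A': "\<sigma>' \<in> Atilde (dec (a # r))" and w: "wt \<sigma>' = cz" using s by (auto simp: Tset_def)
    have "good {k1}" using k1_pos by (simp add: good_def)
    moreover have "\<sigma>' \<noteq> [] \<longrightarrow> k1 < Min (hd \<sigma>')"
    proof
      assume ne': "\<sigma>' \<noteq> []"
      have gh: "good (hd \<sigma>')" using Atilde_good[OF A', of 0] ne' by (cases \<sigma>') auto
      then have "Min (hd \<sigma>') \<in> hd \<sigma>'" by (simp add: good_def)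
      then have "cz (Min (hd \<sigma>')) \<noteq> 0" using Tset_supp[OF s, of "hd \<sigma>'"] ne' by auto
      then show "k1 < Min (hd \<sigma>')" by (rule czs)
    qed
    ultimately have "{k1} # \<sigma>' \<in> Atilde (a # r)" using Atilde_Cons[OF p] A' by auto
    moreover have "wt ({k1} # \<sigma>') = c" using w c1 by (auto simp: cz_def fun_eq_iff)
    ultimately show ?thesis by (simp add: Tset_def)
  qed
  have sup2: "insert k1 (hd \<tau>) # tl \<tau> \<in> Tset (a # r) c" if s: "\<tau> \<in> Tset (a # r) cz" for \<tau>
  proof -
    obtain X \<sigma>' where e: "\<tau> = X # \<sigma>'" using Tset_nonempty[OF s p] by (cases \<tau>) auto
    have A: "\<tau> \<in> Atilde (a # r)" and w: "wt \<tau> = cz" using s by (auto simp: Tset_def)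
    have A': "\<sigma>' \<in> Atilde (dec (a # r))" and cond: "\<sigma>' \<noteq> [] \<longrightarrow> (if a = 1 then Max X < Min (hd \<sigma>') else Max X \<le> Min (hd \<sigma>'))"
      and gX: "good X" using A e Atilde_Cons[OF p] by auto
    have Xk: "\<And>x. x \<in> X \<Longrightarrow> k1 < x" using Tset_supp[OF s] e czs by auto
    have fX: "finite X" and Xne: "X \<noteq> {}" using gX by (auto simp: good_def)
    have MX: "Max (insert k1 X) = Max X"
    proof -
      obtain y where y: "y \<in> X" using Xne by auto
      have "y \<le> Max X" using fX y by simp
      then show ?thesis using Xk[OF y] fX Xne by (simp add: Max_insert)
    qed
    have "good (insert k1 X)" using gX k1_pos by (auto simp: good_def)
    then have "insert k1 X # \<sigma>' \<in> Atilde (a # r)" using Atilde_Cons[OF p] A' cond MX by auto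
    moreover have "k1 \<notin> X" using Xk by auto
    then have "wt (insert k1 X # \<sigma>') = c" using w e c1
      by (auto simp: cz_def fun_eq_iff split: if_splits)
    ultimately show ?thesis using e by (simp add: Tset_def)
  qed
  show ?thesis using sub sup1 sup2 by blast
qed

lemma card_Tset_1:
  assumes p: "pos (a # r)" and c1: "c k1 = 1"
  shows "card (Tset (a # r) c) = card (Tset (dec (a # r)) cz) + card (Tset (a # r) cz)"
proof -
  have fz: "finite (supp cz)" using fin by (rule finite_subset[rotated]) (auto simp: supp_def cz_def)
  have czs: "cz x \<noteq> 0 \<Longrightarrow> k1 < x" for x using k1_min[of x] by (auto simp: cz_def split: if_splits)
  let ?f = "\<lambda>\<tau>. insert k1 (hd \<tau>) # tl \<tau>"
  have nk: "k1 \<notin> hd \<tau>" "\<tau> \<noteq> []" if "\<tau> \<in> Tset (a # r) cz" for \<tau>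
    using Tset_nonempty[OF that p] Tset_supp[OF that, of "hd \<tau>" k1] czs[of k1] by auto
  have inj: "inj_on ?f (Tset (a # r) cz)"
  proof (rule inj_onI)
    fix x y assume x: "x \<in> Tset (a # r) cz" and y: "y \<in> Tset (a # r) cz" and e: "?f x = ?f y"
    have "hd x = hd y" using e nk[OF x] nk[OF y] by (metis insert_ident list.inject)
    moreover have "tl x = tl y" using e by simp
    ultimately show "x = y" using nk[OF x] nk[OF y] by (metis list.collapse)
  qed
  have disj: "Cons {k1} ` Tset (dec (a # r)) cz \<inter> ?f ` Tset (a # r) cz = {}"
  proof -
    have "insert k1 (hd \<tau>) \<noteq> {k1}" if tau: "\<tau> \<in> Tset (a # r) cz" for \<tau>
    proof -
      obtain X \<sigma>' where e: "\<tau> = X # \<sigma>'" using nk(2)[OF tau] by (cases \<tau>) auto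
      have "good X" using Atilde_good[of \<tau> "a#r" 0] tau e by (auto simp: Tset_def)
      then show ?thesis using nk(1)[OF tau] e by (auto simp: good_def)
    qed
    note nn = this
    show ?thesis
    proof (rule equals0I)
      fix z assume "z \<in> Cons {k1} ` Tset (dec (a # r)) cz \<inter> ?f ` Tset (a # r) cz"
      then obtain \<sigma>' \<tau> where "z = {k1} # \<sigma>'" "\<tau> \<in> Tset (a # r) cz" "z = ?f \<tau>" by blast
      then show False using nn by auto
    qed
  qed
  have i1: "inj_on (Cons {k1}) (Tset (dec (a # r)) cz)" by (rule inj_onI) simp
  show ?thesis
    unfolding Tset_1[OF p c1]
    using card_Un_disjoint[OF finite_imageI[OF finite_Tset[OF fz]] finite_imageI[OF finite_Tset[OF fz]] disj]
      card_image[OF i1] card_image[OF inj] by simp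
qed

lemma card_Tset_ge2:
  assumes p: "pos (a # r)" and c2: "2 \<le> c k1"
  shows "card (Tset (a # r) c) = (if a = 1 then 0 else card (Tset ((a - 1) # r) cm))"
  unfolding Tset_ge2[OF p c2] by (auto simp: card_image)

end

definition blkok :: "(nat \<Rightarrow> nat) \<Rightarrow> nat set \<Rightarrow> nat \<Rightarrow> nat \<Rightarrow> nat \<Rightarrow> bool" where
  "blkok c R v lo hi \<longleftrightarrow> (\<Sum>k\<in>{lo<..hi}. c k) = v + card ({lo<..hi} \<inter> R) \<and>
     (\<forall>k\<in>{lo<..hi}. c k \<noteq> 0 \<and> (\<forall>k'\<in>{lo<..<k}. c k' = 0) \<longrightarrow> k \<notin> R)"

definition IGw :: "nat list \<Rightarrow> (nat \<Rightarrow> nat) \<Rightarrow> nat set \<Rightarrow> (nat \<Rightarrow> nat) \<Rightarrow> bool" where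
  "IGw \<alpha> c R i \<longleftrightarrow> i 0 = 0 \<and> (\<forall>j<length \<alpha>. i j < i (Suc j)) \<and> (\<forall>k. i (length \<alpha>) < k \<longrightarrow> c k = 0) \<and>
     (\<forall>j<length \<alpha>. blkok c R (\<alpha> ! j) (i j) (i (Suc j)))"

definition IG :: "nat list \<Rightarrow> (nat \<Rightarrow> nat) \<Rightarrow> nat set \<Rightarrow> bool" where
  "IG \<alpha> c R \<longleftrightarrow> R \<subseteq> supp c \<and> (\<exists>i. IGw \<alpha> c R i)"

lemma i_mono: "(\<forall>j<l. (i::nat\<Rightarrow>nat) j < i (Suc j)) \<Longrightarrow> j \<le> j' \<Longrightarrow> j' \<le> l \<Longrightarrow> i j \<le> i j'"
proof (induction j' arbitrary: j)
  case 0 then show ?case by simp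
next
  case (Suc j')
  show ?case
  proof (cases "j = Suc j'")
    case True then show ?thesis by simp
  next
    case False
    with Suc.prems have "j \<le> j'" by simp
    with Suc have "i j \<le> i j'" by simp
    also have "i j' < i (Suc j')" using Suc.prems by simp
    finally show ?thesis by simp
  qed
qed

lemma i_strict: "(\<forall>j<l. (i::nat\<Rightarrow>nat) j < i (Suc j)) \<Longrightarrow> j < j' \<Longrightarrow> j' \<le> l \<Longrightarrow> i j < i j'"
proof -
  assume a: "\<forall>j<l. i j < i (Suc j)" "j < j'" "j' \<le> l"
  then have "i j < i (Suc j)" by simp
  also have "i (Suc j) \<le> i j'" using i_mono[OF a(1)] a by simp
  finally show ?thesis .
qed

lemma i_part: "(\<forall>j<l. (i::nat\<Rightarrow>nat) j < i (Suc j)) \<Longrightarrow> i 0 < k \<Longrightarrow> k \<le> i l \<Longrightarrow> \<exists>j<l. i j < k \<and> k \<le> i (Suc j)"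
proof (induction l)
  case 0 then show ?case by simp
next
  case (Suc l)
  show ?case
  proof (cases "k \<le> i l")
    case True
    with Suc obtain j where "j < l" "i j < k \<and> k \<le> i (Suc j)" by auto
    then show ?thesis by (intro exI[of _ j]) simp
  next
    case False
    then show ?thesis using Suc.prems by (intro exI[of _ l]) simp
  qed
qed

lemma blk_nonzero: "blkok c R v lo hi \<Longrightarrow> 0 < v \<Longrightarrow> \<exists>x\<in>{lo<..hi}. c x \<noteq> 0"
proof (rule ccontr)
  assume "blkok c R v lo hi" "0 < v" "\<not> (\<exists>x\<in>{lo<..hi}. c x \<noteq> 0)"
  then show False by (simp add: blkok_def)
qed

lemma sum_lb: "finite A \<Longrightarrow> R \<subseteq> supp c \<Longrightarrow> card (A \<inter> R) \<le> sum c A"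
proof -
  assume f: "finite A" and R: "R \<subseteq> supp c"
  have "card (A \<inter> R) = (\<Sum>k\<in>A \<inter> R. 1)" by simp
  also have "\<dots> \<le> (\<Sum>k\<in>A \<inter> R. c k)" using R by (intro sum_mono) (auto simp: supp_def)
  also have "\<dots> \<le> sum c A" using f by (intro sum_mono2) auto
  finally show ?thesis .
qed

lemma sum_lb1: "finite A \<Longrightarrow> R \<subseteq> supp c \<Longrightarrow> p \<in> A \<Longrightarrow> p \<notin> R \<Longrightarrow> c p + card (A \<inter> R) \<le> sum c A"
proof -
  assume f: "finite A" and R: "R \<subseteq> supp c" and p: "p \<in> A" "p \<notin> R"
  have "A \<inter> R = (A - {p}) \<inter> R" using p by auto
  then have "card (A \<inter> R) \<le> sum c (A - {p})" using sum_lb[of "A - {p}" R c] f R by simp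
  moreover have "sum c A = c p + sum c (A - {p})" using f p by (simp add: sum.remove)
  ultimately show ?thesis by simp
qed

lemma sum_upd: "finite A \<Longrightarrow> p \<in> A \<Longrightarrow> sum (f(p := v)) A + f p = sum f A + v"
proof -
  assume f: "finite A" and p: "p \<in> A"
  have "sum (f(p := v)) A = v + sum (f(p := v)) (A - {p})" using f p by (simp add: sum.remove)
  also have "sum (f(p := v)) (A - {p}) = sum f (A - {p})" by (rule sum.cong) auto
  finally show ?thesis using f p by (simp add: sum.remove algebra_simps)
qed

lemma blkok_cong:
  assumes "\<And>x. x \<in> {lo<..hi} \<Longrightarrow> c' x = c x" "\<And>x. x \<in> {lo<..hi} \<Longrightarrow> x \<in> R' \<longleftrightarrow> x \<in> R"
  shows "blkok c' R' v lo hi \<longleftrightarrow> blkok c R v lo hi"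
proof -
  have s: "(\<Sum>k\<in>{lo<..hi}. c' k) = (\<Sum>k\<in>{lo<..hi}. c k)" using assms(1) by (rule sum.cong[OF refl])
  have cd: "{lo<..hi} \<inter> R' = {lo<..hi} \<inter> R" using assms(2) by blast
  have b: "(\<forall>k\<in>{lo<..hi}. c' k \<noteq> 0 \<and> (\<forall>k'\<in>{lo<..<k}. c' k' = 0) \<longrightarrow> k \<notin> R') \<longleftrightarrow>
           (\<forall>k\<in>{lo<..hi}. c k \<noteq> 0 \<and> (\<forall>k'\<in>{lo<..<k}. c k' = 0) \<longrightarrow> k \<notin> R)"
  proof -
    have "\<And>k k'. k \<in> {lo<..hi} \<Longrightarrow> k' \<in> {lo<..<k} \<Longrightarrow> c' k' = c k'" using assms(1) by auto
    then show ?thesis using assms by (metis greaterThanAtMost_iff)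
  qed
  show ?thesis unfolding blkok_def s cd b ..
qed

lemma nz_le: "IGw \<alpha> c R i \<Longrightarrow> c x \<noteq> 0 \<Longrightarrow> x \<le> i (length \<alpha>)"
  unfolding IGw_def by (meson not_le)

lemma min_black:
  assumes c0: "c 0 = 0" and w: "IGw \<alpha> c R i" and x: "c x \<noteq> 0" and mn: "\<And>y. c y \<noteq> 0 \<Longrightarrow> x \<le> y"
  shows "x \<notin> R"
proof -
  have "0 < x" using x c0 by (cases x) auto
  have st: "\<forall>j<length \<alpha>. i j < i (Suc j)" and i0: "i 0 = 0" using w by (auto simp: IGw_def)
  obtain j where j: "j < length \<alpha>" "i j < x" "x \<le> i (Suc j)"
    using i_part[OF st, of x] nz_le[OF w x] i0 \<open>0 < x\<close> by auto
  have "blkok c R (\<alpha> ! j) (i j) (i (Suc j))" using w j by (auto simp: IGw_def)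
  moreover have "\<forall>k'\<in>{i j<..<x}. c k' = 0" using mn by (meson greaterThanLessThan_iff not_le)
  ultimately show ?thesis using j x unfolding blkok_def by auto
qed

lemma sum_split_ivl: "(lo::nat) \<le> m \<Longrightarrow> m \<le> hi \<Longrightarrow> sum f {lo<..hi} = sum f {lo<..m} + sum f {m<..hi}"
proof -
  assume a: "lo \<le> m" "m \<le> hi"
  have "{lo<..hi} = {lo<..m} \<union> {m<..hi}" using a by auto
  then show ?thesis by (simp add: sum.union_disjoint ivl_disj_int)
qed

lemma first_in_blk0:
  assumes w: "IGw (a # r) c R i" and a: "0 < a" and mn: "\<And>x. c x \<noteq> 0 \<Longrightarrow> y \<le> x" and y: "0 < y"
  shows "y \<in> {0<..i 1}" "i 0 = 0"
proof -
  have "blkok c R a (i 0) (i 1)" using w by (auto simp: IGw_def)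
  then obtain x where "x \<in> {i 0<..i 1}" "c x \<noteq> 0" using blk_nonzero a by fastforce
  moreover have "i 0 = 0" using w by (simp add: IGw_def)
  ultimately show "y \<in> {0<..i 1}" "i 0 = 0" using mn y by fastforce+
qed

lemma later_gt:
  assumes w: "IGw \<alpha> c R i" and j: "1 \<le> j" "j \<le> length \<alpha>" and x: "i j < x"
  shows "i 1 < x"
proof -
  have "i 1 \<le> i j" using i_mono[of "length \<alpha>" i 1 j] w j by (simp add: IGw_def)
  then show ?thesis using x by simp
qed

lemma modify0:
  assumes w: "IGw (a # r) c R i" and p: "p \<in> {0<..i 1}" and ceq: "\<And>x. x \<noteq> p \<Longrightarrow> c' x = c x"
    and nz: "c' p \<noteq> 0" "c p \<noteq> 0" and ar: "a' + c p = a + c' p"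
  shows "IGw (a' # r) c' R i"
proof -
  have i0: "i 0 = 0" and st: "\<forall>j<length (a#r). i j < i (Suc j)" and bey: "\<forall>k. i (length (a#r)) < k \<longrightarrow> c k = 0"
    and bl: "\<forall>j<length (a#r). blkok c R ((a#r) ! j) (i j) (i (Suc j))" using w by (auto simp: IGw_def)
  have c'eq: "c' = c(p := c' p)" using ceq by (auto simp: fun_eq_iff)
  have nzeq: "c' x \<noteq> 0 \<longleftrightarrow> c x \<noteq> 0" for x using ceq nz by (cases "x = p") auto
  have b0: "blkok c R a 0 (i 1)" using bl i0 by (metis length_Cons nth_Cons_0 zero_less_Suc One_nat_def)
  have b0': "blkok c' R a' 0 (i 1)"
  proof -
    have "sum c' {0<..i 1} + c p = sum c {0<..i 1} + c' p"
      using sum_upd[of "{0<..i 1}" p c "c' p"] p c'eq by simp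
    then have "sum c' {0<..i 1} = a' + card ({0<..i 1} \<inter> R)" using b0 ar by (simp add: blkok_def)
    moreover have nz0: "c' x = 0 \<longleftrightarrow> c x = 0" for x using nzeq by blast
    ultimately show ?thesis using b0 unfolding blkok_def nz0 by blast
  qed
  have bj: "blkok c' R ((a'#r) ! j) (i j) (i (Suc j))" if j: "j < length (a'#r)" for j
  proof (cases j)
    case 0 then show ?thesis using b0' i0 by simp
  next
    case (Suc j')
    have "\<And>x. x \<in> {i j<..i (Suc j)} \<Longrightarrow> c' x = c x"
    proof -
      fix x assume "x \<in> {i j<..i (Suc j)}"
      then have "i 1 < x" using later_gt[OF w, of j] Suc j by simp
      then show "c' x = c x" using p ceq by auto
    qed
    then show ?thesis using bl j Suc by (subst blkok_cong) auto
  qed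
  have bey': "\<forall>k. i (length (a'#r)) < k \<longrightarrow> c' k = 0"
  proof (intro allI impI)
    fix k assume k: "i (length (a'#r)) < k"
    then have "i 1 < k" using later_gt[OF w, of "length (a#r)"] by simp
    then show "c' k = 0" using p ceq bey k by auto
  qed
  show ?thesis unfolding IGw_def using i0 st bey' bj by auto
qed

definition Gl :: "nat list \<Rightarrow> (nat \<Rightarrow> nat) \<Rightarrow> nat set set" where
  "Gl \<alpha> c = {R. IG \<alpha> c R}"

lemma finite_Gl: "finite (supp c) \<Longrightarrow> finite (Gl \<alpha> c)"
proof -
  assume "finite (supp c)"
  moreover have "Gl \<alpha> c \<subseteq> Pow (supp c)" by (auto simp: Gl_def IG_def)
  ultimately show ?thesis by (meson finite_Pow_iff finite_subset)
qed

context K1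
begin

lemma k1_blk:
  assumes w: "IGw (a # r) c R i" and p: "pos (a # r)"
  shows "k1 \<in> {0<..i 1}"
  using first_in_blk0[OF w _ k1_min k1_pos] p by (auto simp: pos_def)

lemma Gl_ge2:
  assumes p: "pos (a # r)" and c2: "2 \<le> c k1"
  shows "Gl (a # r) c = (if a = 1 then {} else Gl ((a - 1) # r) cm)"
proof -
  have supp_cm: "supp cm = supp c" using c2 by (auto simp: supp_def cm_def)
  have ceq: "\<And>x. x \<noteq> k1 \<Longrightarrow> cm x = c x" by (simp add: cm_def)
  have 1: "a \<noteq> 1 \<and> IG ((a - 1) # r) cm R" if g: "IG (a # r) c R" for R
  proof -
    obtain i where w: "IGw (a # r) c R i" and Rs: "R \<subseteq> supp c" using g by (auto simp: IG_def)
    have kb: "k1 \<in> {0<..i 1}" by (rule k1_blk[OF w p])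
    have kR: "k1 \<notin> R" using min_black[OF c0 w k1_supp k1_min] .
    have "blkok c R a (i 0) (i 1)" using w by (auto simp: IGw_def)
    then have "sum c {0<..i 1} = a + card ({0<..i 1} \<inter> R)" using w by (simp add: IGw_def blkok_def)
    moreover have "c k1 + card ({0<..i 1} \<inter> R) \<le> sum c {0<..i 1}"
      using sum_lb1[OF _ Rs kb kR] by simp
    ultimately have ak: "c k1 \<le> a" by simp
    have "IGw ((a - 1) # r) cm R i"
      using modify0[OF w kb, of cm "a - 1"] ceq c2 ak by (auto simp: cm_def)
    then show ?thesis using ak c2 Rs supp_cm by (auto simp: IG_def)
  qed
  have 2: "IG (a # r) c R" if g: "IG ((a - 1) # r) cm R" and a1: "a \<noteq> 1" for R
  proof -
    obtain i where w: "IGw ((a - 1) # r) cm R i" and Rs: "R \<subseteq> supp cm" using g by (auto simp: IG_def)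
    have a2: "0 < a - 1" using a1 p by (auto simp: pos_def)
    have mn: "\<And>x. cm x \<noteq> 0 \<Longrightarrow> k1 \<le> x" using k1_min by (auto simp: cm_def split: if_splits)
    have kb: "k1 \<in> {0<..i 1}" using first_in_blk0[OF w a2 mn k1_pos] by simp
    have "IGw (a # r) c R i"
      using modify0[OF w kb, of c a] ceq c2 a2 by (auto simp: cm_def)
    then show ?thesis using Rs supp_cm by (auto simp: IG_def)
  qed
  show ?thesis using 1 2 unfolding Gl_def by auto
qed

lemma card_Gl_ge2:
  assumes p: "pos (a # r)" and c2: "2 \<le> c k1"
  shows "card (Gl (a # r) c) = (if a = 1 then 0 else card (Gl ((a - 1) # r) cm))"
  using Gl_ge2[OF p c2] by simp

end

lemma blkok_left:
  assumes m: "lo \<le> m" "m \<le> hi" and z: "\<And>x. x \<in> {lo<..m} \<Longrightarrow> c x = 0" and R: "R \<subseteq> supp c"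
  shows "blkok c R v lo hi \<longleftrightarrow> blkok c R v m hi"
proof -
  have s: "sum c {lo<..hi} = sum c {m<..hi}"
    using sum_split_ivl[OF m, of c] z by simp
  have "m < x" if "x \<in> R" "lo < x" for x
    using z[of x] R that by (cases "x \<le> m") (auto simp: supp_def)
  then have cd: "{lo<..hi} \<inter> R = {m<..hi} \<inter> R" using m by auto
  have b: "(\<forall>k\<in>{lo<..hi}. c k \<noteq> 0 \<and> (\<forall>k'\<in>{lo<..<k}. c k' = 0) \<longrightarrow> k \<notin> R) \<longleftrightarrow>
           (\<forall>k\<in>{m<..hi}. c k \<noteq> 0 \<and> (\<forall>k'\<in>{m<..<k}. c k' = 0) \<longrightarrow> k \<notin> R)"
  proof
    assume L: "\<forall>k\<in>{lo<..hi}. c k \<noteq> 0 \<and> (\<forall>k'\<in>{lo<..<k}. c k' = 0) \<longrightarrow> k \<notin> R"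
    show "\<forall>k\<in>{m<..hi}. c k \<noteq> 0 \<and> (\<forall>k'\<in>{m<..<k}. c k' = 0) \<longrightarrow> k \<notin> R"
    proof (intro ballI impI)
      fix k assume k: "k \<in> {m<..hi}" and h: "c k \<noteq> 0 \<and> (\<forall>k'\<in>{m<..<k}. c k' = 0)"
      have "\<forall>k'\<in>{lo<..<k}. c k' = 0"
      proof
        fix k' assume "k' \<in> {lo<..<k}"
        then show "c k' = 0" using z h by (cases "k' \<le> m") auto
      qed
      then show "k \<notin> R" using L k h m by auto
    qed
  next
    assume L: "\<forall>k\<in>{m<..hi}. c k \<noteq> 0 \<and> (\<forall>k'\<in>{m<..<k}. c k' = 0) \<longrightarrow> k \<notin> R"
    show "\<forall>k\<in>{lo<..hi}. c k \<noteq> 0 \<and> (\<forall>k'\<in>{lo<..<k}. c k' = 0) \<longrightarrow> k \<notin> R"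
    proof (intro ballI impI)
      fix k assume k: "k \<in> {lo<..hi}" and h: "c k \<noteq> 0 \<and> (\<forall>k'\<in>{lo<..<k}. c k' = 0)"
      have "m < k" using z k h by (cases "k \<le> m") auto
      then show "k \<notin> R" using L k h m by auto
    qed
  qed
  show ?thesis unfolding blkok_def s cd b ..
qed

context K1
begin

definition k2 where "k2 = Min (supp cz)"

lemma czs: "cz x \<noteq> 0 \<Longrightarrow> k1 < x \<and> c x \<noteq> 0"
  using k1_min[of x] by (auto simp: cz_def split: if_splits)

lemma cz_zero: "c x = 0 \<Longrightarrow> cz x = 0" by (simp add: cz_def)
lemma cz_eq: "x \<noteq> k1 \<Longrightarrow> cz x = c x" by (simp add: cz_def)
lemma cz0: "cz 0 = 0" using c0 by (simp add: cz_def)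
lemma fin_cz: "finite (supp cz)" using fin by (rule finite_subset[rotated]) (auto simp: supp_def cz_def)

lemma k2_props:
  assumes "supp cz \<noteq> {}"
  shows "cz k2 \<noteq> 0" "\<And>x. cz x \<noteq> 0 \<Longrightarrow> k2 \<le> x" "k1 < k2" "c k2 \<noteq> 0"
proof -
  show "cz k2 \<noteq> 0" using Min_in[OF fin_cz assms] by (simp add: k2_def supp_def)
  then show "k1 < k2" "c k2 \<noteq> 0" using czs by auto
  show "\<And>x. cz x \<noteq> 0 \<Longrightarrow> k2 \<le> x" using Min_le[OF fin_cz] by (simp add: k2_def supp_def)
qed

lemma low_zero: "x < k1 \<Longrightarrow> c x = 0" using k1_min by force

lemma B1f:
  assumes p: "pos (a # r)" and c1: "c k1 = 1" and g: "IG (a # r) c R" and nk2: "supp cz \<noteq> {} \<longrightarrow> k2 \<notin> R"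
  shows "IG (dec (a # r)) cz R"
proof -
  obtain i where w: "IGw (a # r) c R i" and Rs: "R \<subseteq> supp c" using g by (auto simp: IG_def)
  have kb: "k1 \<in> {0<..i 1}" by (rule k1_blk[OF w p])
  have kR: "k1 \<notin> R" using min_black[OF c0 w k1_supp k1_min] .
  have Rs': "R \<subseteq> supp cz" using Rs kR by (auto simp: supp_def cz_def)
  have i0: "i 0 = 0" and st: "\<forall>j<length (a#r). i j < i (Suc j)" and bey: "\<forall>k. i (length (a#r)) < k \<longrightarrow> c k = 0"
    and bl: "\<forall>j<length (a#r). blkok c R ((a#r) ! j) (i j) (i (Suc j))" using w by (auto simp: IGw_def)
  have b0: "blkok c R a 0 (i 1)" using bl i0 by (metis length_Cons nth_Cons_0 zero_less_Suc One_nat_def)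
  have apos: "0 < a" using p by (simp add: pos_def)
  have sumz: "sum cz {0<..i 1} + 1 = sum c {0<..i 1}"
    using sum_upd[of "{0<..i 1}" k1 c 0] kb c1 by (simp add: cz_def)
  have gt1: "i 1 < x \<Longrightarrow> cz x = c x" for x using kb cz_eq by auto
  show ?thesis
  proof (cases "a = 1")
    case False
    then have da: "dec (a # r) = (a - 1) # r" using apos by simp
    have b0': "blkok cz R (a - 1) 0 (i 1)"
    proof -
      have "sum cz {0<..i 1} = (a - 1) + card ({0<..i 1} \<inter> R)" using sumz b0 apos by (simp add: blkok_def)
      moreover have "k \<notin> R" if k: "k \<in> {0<..i 1}" "cz k \<noteq> 0" "\<forall>k'\<in>{0<..<k}. cz k' = 0" for k
      proof -
        have ne: "supp cz \<noteq> {}" using k by (auto simp: supp_def)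
        note kp = k2_props[OF ne]
        have "k2 \<le> k" using kp k by blast
        moreover have "\<not> k2 < k" using k kp by (metis greaterThanLessThan_iff k1_pos less_trans)
        ultimately have "k = k2" by simp
        then show ?thesis using nk2 ne by simp
      qed
      ultimately show ?thesis unfolding blkok_def by blast
    qed
    have "IGw ((a - 1) # r) cz R i"
      unfolding IGw_def
    proof (intro conjI allI impI)
      show "i 0 = 0" by (rule i0)
      fix j assume j: "j < length ((a - 1) # r)"
      then show "i j < i (Suc j)" using st by simp
      show "blkok cz R (((a - 1) # r) ! j) (i j) (i (Suc j))"
      proof (cases j)
        case 0 then show ?thesis using b0' i0 by simp
      next
        case (Suc j')
        have "blkok cz R (((a - 1) # r) ! j) (i j) (i (Suc j)) = blkok c R ((a # r) ! j) (i j) (i (Suc j))"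
          using later_gt[OF w, of j] j Suc gt1 by (subst blkok_cong) auto
        then show ?thesis using bl j by simp
      qed
    next
      fix k assume "i (length ((a - 1) # r)) < k"
      then show "cz k = 0" using bey cz_zero by simp
    qed
    then show ?thesis using Rs' da by (auto simp: IG_def)
  next
    case True
    then have da: "dec (a # r) = r" by simp
    have z0: "cz x = 0" if x: "x \<in> {0<..i 1}" for x
    proof (rule ccontr)
      assume nz: "cz x \<noteq> 0"
      then have ne: "supp cz \<noteq> {}" by (auto simp: supp_def)
      note kp = k2_props[OF ne]
      have k2b: "k2 \<in> {0<..i 1}" using kp nz x k1_pos by fastforce
      have k2R: "k2 \<notin> R" using nk2 ne by simp
      let ?A = "{0<..i 1}"
      have "c k2 + card ((?A - {k1}) \<inter> R) \<le> sum c (?A - {k1})"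
        using sum_lb1[of "?A - {k1}" R c k2] Rs k2b k2R kp by auto
      moreover have "(?A - {k1}) \<inter> R = ?A \<inter> R" using kR by auto
      moreover have "sum c ?A = c k1 + sum c (?A - {k1})" using kb by (simp add: sum.remove)
      moreover have "sum c ?A = a + card (?A \<inter> R)" using b0 by (simp add: blkok_def)
      ultimately show False using c1 True kp by simp
    qed
    define i' where "i' = (\<lambda>j. if j = 0 then 0 else i (Suc j))"
    have "IGw r cz R i'"
      unfolding IGw_def
    proof (intro conjI allI impI)
      show "i' 0 = 0" by (simp add: i'_def)
      fix j assume j: "j < length r"
      show "i' j < i' (Suc j)"
      proof (cases j)
        case 0
        have "1 < length (a # r)" "0 < length (a # r)" using j by auto
        then have "i 0 < i 1" "i 1 < i 2" using st by (auto simp: numeral_2_eq_2)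
        then show ?thesis using 0 i0 by (simp add: i'_def numeral_2_eq_2)
      next
        case (Suc j') then show ?thesis using st j by (simp add: i'_def)
      qed
      show "blkok cz R (r ! j) (i' j) (i' (Suc j))"
      proof (cases j)
        case 0
        have b1: "blkok c R (r ! 0) (i 1) (i 2)" using bl j by (auto simp: numeral_2_eq_2 dest: spec[of _ 1])
        have "blkok cz R (r ! 0) (i 1) (i 2)" using b1 gt1 by (subst blkok_cong) auto
        moreover have "i 1 \<le> i 2" using st j by (auto simp: numeral_2_eq_2 dest: spec[of _ 1])
        ultimately have "blkok cz R (r ! 0) 0 (i 2)" using blkok_left[of 0 "i 1" "i 2" cz R] z0 Rs' by simp
        then show ?thesis using 0 by (simp add: i'_def numeral_2_eq_2)
      next
        case (Suc j')
        have b1: "blkok c R (r ! j) (i (Suc j)) (i (Suc (Suc j)))" using bl j by auto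
        have "blkok cz R (r ! j) (i (Suc j)) (i (Suc (Suc j))) = blkok c R (r ! j) (i (Suc j)) (i (Suc (Suc j)))"
          using later_gt[OF w, of "Suc j"] j gt1 by (subst blkok_cong) auto
        then show ?thesis using b1 Suc by (simp add: i'_def)
      qed
    next
      fix k assume k: "i' (length r) < k"
      show "cz k = 0"
      proof (cases "r = []")
        case True
        then have "0 < k" using k by (simp add: i'_def)
        then show ?thesis using z0[of k] bey True cz_zero by (cases "k \<le> i 1") auto
      next
        case False
        then have "i (length (a # r)) < k" using k by (simp add: i'_def)
        then show ?thesis using bey cz_zero by simp
      qed
    qed
    then show ?thesis using Rs' da by (auto simp: IG_def)
  qed
qed

end

context K1
begin

lemma sum_cz: "finite A \<Longrightarrow> k1 \<in> A \<Longrightarrow> sum c A = sum cz A + c k1"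
proof -
  assume f: "finite A" and k: "k1 \<in> A"
  have "sum c A = c k1 + sum c (A - {k1})" using f k by (simp add: sum.remove)
  moreover have "sum cz A = cz k1 + sum cz (A - {k1})" using f k by (simp add: sum.remove)
  moreover have "sum cz (A - {k1}) = sum c (A - {k1})" by (rule sum.cong) (auto simp: cz_def)
  moreover have "cz k1 = 0" by (simp add: cz_def)
  ultimately show ?thesis by simp
qed

lemma B1b:
  assumes p: "pos (a # r)" and c1: "c k1 = 1" and g: "IG (dec (a # r)) cz R"
  shows "IG (a # r) c R"
proof -
  obtain i where w: "IGw (dec (a # r)) cz R i" and Rs: "R \<subseteq> supp cz" using g by (auto simp: IG_def)
  have Rs': "R \<subseteq> supp c" using Rs czs by (auto simp: supp_def)
  have kR: "k1 \<notin> R" using Rs by (auto simp: supp_def cz_def)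
  have apos: "0 < a" using p by (simp add: pos_def)
  have mn: "\<And>x. cz x \<noteq> 0 \<Longrightarrow> k1 \<le> x" using czs by fastforce
  have i0: "i 0 = 0" and st: "\<forall>j<length (dec (a#r)). i j < i (Suc j)"
    and bey: "\<forall>k. i (length (dec (a#r))) < k \<longrightarrow> cz k = 0"
    and bl: "\<forall>j<length (dec (a#r)). blkok cz R ((dec (a#r)) ! j) (i j) (i (Suc j))" using w by (auto simp: IGw_def)
  show ?thesis
  proof (cases "a = 1")
    case False
    then have da: "dec (a # r) = (a - 1) # r" using apos by simp
    have a2: "0 < a - 1" using False apos by simp
    have w': "IGw ((a - 1) # r) cz R i" using w da by simp
    have kb: "k1 \<in> {0<..i 1}" using first_in_blk0[OF w' a2 mn k1_pos] by simp
    have b0: "blkok cz R (a - 1) 0 (i 1)" using bl[rule_format, of 0] i0 da by simp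
    have b0': "blkok c R a 0 (i 1)"
    proof -
      have "sum c {0<..i 1} = sum cz {0<..i 1} + 1" using sum_cz[of "{0<..i 1}"] kb c1 by simp
      then have "sum c {0<..i 1} = a + card ({0<..i 1} \<inter> R)" using b0 apos by (simp add: blkok_def)
      moreover have "k \<notin> R" if k: "k \<in> {0<..i 1}" "c k \<noteq> 0" "\<forall>k'\<in>{0<..<k}. c k' = 0" for k
      proof -
        have "k = k1"
        proof (rule ccontr)
          assume "k \<noteq> k1"
          then have "k1 < k" using k1_min[of k] k(2) by simp
          then have "k1 \<in> {0<..<k}" using k1_pos by simp
          then have "c k1 = 0" using k(3) by blast
          then show False using k1_supp by simp
        qed
        then show ?thesis using kR by simp
      qed
      ultimately show ?thesis unfolding blkok_def by blast
    qed
    have gt1: "i 1 < x \<Longrightarrow> c x = cz x" for x using kb cz_eq[of x] by simp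
    have "IGw (a # r) c R i"
      unfolding IGw_def
    proof (intro conjI allI impI)
      show "i 0 = 0" by (rule i0)
      fix j assume j: "j < length (a # r)"
      then show "i j < i (Suc j)" using st da by simp
      show "blkok c R ((a # r) ! j) (i j) (i (Suc j))"
      proof (cases j)
        case 0 then show ?thesis using b0' i0 by simp
      next
        case (Suc j')
        have "blkok c R ((a # r) ! j) (i j) (i (Suc j)) = blkok cz R ((a # r) ! j) (i j) (i (Suc j))"
        proof (rule blkok_cong)
          fix x assume "x \<in> {i j<..i (Suc j)}"
          then have "i 1 < x" using later_gt[OF w, of j] j Suc da by simp
          then show "c x = cz x" by (rule gt1)
        qed simp
        moreover have "(a # r) ! j = (dec (a # r)) ! j" using Suc da by simp
        ultimately show ?thesis using bl j da by simp
      qed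
    next
      fix k assume k: "i (length (a # r)) < k"
      then have "i 1 < k" using later_gt[OF w, of "length (a#r)"] da by simp
      then show "c k = 0" using bey k gt1 da by simp
    qed
    then show ?thesis using Rs' by (auto simp: IG_def)
  next
    case True
    then have da: "dec (a # r) = r" by simp
    have k1lt: "k1 < i 1" if rne0: "r \<noteq> []"
    proof -
      obtain r0 r' where rr: "r = r0 # r'" using rne0 by (cases r) auto
      have "0 < r0" using p rr by (simp add: pos_def)
      moreover have "blkok cz R r0 (i 0) (i 1)" using bl[rule_format, of 0] da rr by simp
      ultimately obtain x where x: "x \<in> {i 0<..i 1}" "cz x \<noteq> 0" using blk_nonzero by blast
      then have "k1 < x" using czs by blast
      then show ?thesis using x by simp
    qed
    define i' where "i' = (\<lambda>j. if j = 0 then 0 else if j = 1 then k1 else i (j - 1))"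
    have zlow: "cz x = 0" if "x \<le> k1" for x
    proof (cases "x = k1")
      case True then show ?thesis by (simp add: cz_def)
    next
      case False then show ?thesis using that low_zero[of x] cz_eq[of x] by simp
    qed
    have "IGw (a # r) c R i'"
      unfolding IGw_def
    proof (intro conjI allI impI)
      show "i' 0 = 0" by (simp add: i'_def)
      fix j assume j: "j < length (a # r)"
      show "i' j < i' (Suc j)"
      proof (cases j)
        case 0 then show ?thesis using k1_pos by (simp add: i'_def)
      next
        case (Suc j')
        show ?thesis
        proof (cases j')
          case 0
          then have "r \<noteq> []" using Suc j by auto
          then show ?thesis using Suc 0 k1lt by (simp add: i'_def)
        next
          case (Suc j'') then show ?thesis using \<open>j = Suc j'\<close> j st da by (simp add: i'_def)
        qed
      qed
      show "blkok c R ((a # r) ! j) (i' j) (i' (Suc j))"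
      proof (cases j)
        case 0
        have s: "sum c {0<..k1} = 1"
        proof -
          have "sum c {0<..k1} = c k1 + sum c ({0<..k1} - {k1})" using k1_pos by (simp add: sum.remove)
          also have "sum c ({0<..k1} - {k1}) = 0" using low_zero by (intro sum.neutral) auto
          finally show ?thesis using c1 by simp
        qed
        have "k1 < x" if "x \<in> R" for x
        proof -
          have "cz x \<noteq> 0" using Rs that by (auto simp: supp_def)
          then show ?thesis using czs by blast
        qed
        then have cd: "{0<..k1} \<inter> R = {}" by fastforce
        have bk: "k \<notin> R" if "k \<in> {0<..k1}" "c k \<noteq> 0" for k
          using that low_zero[of k] kR by (cases "k = k1") auto
        have "blkok c R 1 0 k1" unfolding blkok_def using s cd bk by auto
        then show ?thesis using 0 True by (simp add: i'_def)
      next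
        case (Suc j')
        show ?thesis
        proof (cases j')
          case 0
          have rne: "r \<noteq> []" using j Suc 0 by auto
          have b: "blkok cz R (r ! 0) 0 (i 1)" using bl[rule_format, of 0] da i0 rne by simp
          have "blkok cz R (r ! 0) k1 (i 1)"
            using blkok_left[of 0 k1 "i 1" cz R] b zlow Rs k1lt[OF rne] by simp
          moreover have "blkok c R (r ! 0) k1 (i 1) = blkok cz R (r ! 0) k1 (i 1)"
            using cz_eq by (subst blkok_cong) auto
          ultimately show ?thesis using Suc 0 by (simp add: i'_def)
        next
          case (Suc j'')
          have rne: "r \<noteq> []" using j \<open>j = Suc j'\<close> by auto
          have jr: "Suc j'' < length r" using j \<open>j = Suc j'\<close> Suc by simp
          have b: "blkok cz R (r ! Suc j'') (i (Suc j'')) (i (Suc (Suc j'')))" using bl da jr by auto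
          have "blkok c R (r ! Suc j'') (i (Suc j'')) (i (Suc (Suc j''))) = blkok cz R (r ! Suc j'') (i (Suc j'')) (i (Suc (Suc j'')))"
          proof (rule blkok_cong)
            fix x assume "x \<in> {i (Suc j'')<..i (Suc (Suc j''))}"
            then have "i 1 < x" using later_gt[OF w, of "Suc j''"] jr da by simp
            then show "c x = cz x" using k1lt[OF rne] cz_eq by simp
          qed simp
          then show ?thesis using b \<open>j = Suc j'\<close> Suc by (simp add: i'_def)
        qed
      qed
    next
      fix k assume k: "i' (length (a # r)) < k"
      show "c k = 0"
      proof (cases "r = []")
        case True
        then have "k1 < k" using k by (simp add: i'_def)
        then show ?thesis using bey True da i0 cz_eq[of k] by simp
      next
        case False
        then have kk: "i (length r) < k" using k by (simp add: i'_def)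
        moreover have "i 1 \<le> i (length r)" using i_mono[of "length r" i 1 "length r"] st da False
          by (simp add: Suc_leI)
        ultimately have "k1 < k" using k1lt[OF False] by simp
        then show ?thesis using bey kk da cz_eq[of k] by simp
      qed
    qed
    then show ?thesis using Rs' by (auto simp: IG_def)
  qed
qed

end

context K1
begin

lemma B2f:
  assumes p: "pos (a # r)" and c1: "c k1 = 1" and g: "IG (a # r) c R" and k2R: "k2 \<in> R" and ne: "supp cz \<noteq> {}"
  shows "IG (a # r) cz (R - {k2})"
proof -
  obtain i where w: "IGw (a # r) c R i" and Rs: "R \<subseteq> supp c" using g by (auto simp: IG_def)
  have kb: "k1 \<in> {0<..i 1}" by (rule k1_blk[OF w p])
  have kR: "k1 \<notin> R" using min_black[OF c0 w k1_supp k1_min] .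
  note kp = k2_props[OF ne]
  have i0: "i 0 = 0" and st: "\<forall>j<length (a#r). i j < i (Suc j)" and bey: "\<forall>k. i (length (a#r)) < k \<longrightarrow> c k = 0"
    and bl: "\<forall>j<length (a#r). blkok c R ((a#r) ! j) (i j) (i (Suc j))" using w by (auto simp: IGw_def)
  have b0: "blkok c R a 0 (i 1)" using bl[rule_format, of 0] i0 by simp
  have gt1: "i 1 < x \<Longrightarrow> cz x = c x" for x using kb cz_eq[of x] by simp
  have k2b: "k2 \<in> {0<..i 1}"
  proof -
    have "0 < k2" using kp k1_pos by simp
    moreover have "k2 \<le> i (length (a#r))" using nz_le[OF w kp(4)] .
    ultimately obtain j where j: "j < length (a#r)" "i j < k2" "k2 \<le> i (Suc j)"
      using i_part[OF st, of k2] i0 by auto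
    have "j = 0"
    proof (rule ccontr)
      assume "j \<noteq> 0"
      then have j1: "i 1 \<le> i j" using i_mono[OF st, of 1 j] j by simp
      have "\<forall>k'\<in>{i j<..<k2}. c k' = 0"
      proof
        fix k' assume k': "k' \<in> {i j<..<k2}"
        then have "k1 < k'" using kb j1 by simp
        show "c k' = 0"
        proof (rule ccontr)
          assume "c k' \<noteq> 0"
          then have "cz k' \<noteq> 0" using cz_eq[of k'] \<open>k1 < k'\<close> by simp
          then have "k2 \<le> k'" using kp(2) by blast
          then show False using k' by simp
        qed
      qed
      moreover have "blkok c R ((a#r) ! j) (i j) (i (Suc j))" using bl j by simp
      ultimately have "k2 \<notin> R" using j kp(4) unfolding blkok_def by auto
      then show False using k2R by simp
    qed
    then show ?thesis using j i0 \<open>0 < k2\<close> by simp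
  qed
  let ?A = "{0<..i 1}"
  have b0': "blkok cz (R - {k2}) a 0 (i 1)"
  proof -
    have s: "sum c ?A = sum cz ?A + 1" using sum_cz[of ?A] kb c1 by simp
    have cA: "card (?A \<inter> R) = card (?A \<inter> (R - {k2})) + 1"
    proof -
      have "?A \<inter> (R - {k2}) = (?A \<inter> R) - {k2}" by blast
      moreover have "k2 \<in> ?A \<inter> R" using k2b k2R by simp
      moreover have "finite (?A \<inter> R)" by simp
      ultimately have "card (?A \<inter> R) > 0" "card (?A \<inter> (R - {k2})) = card (?A \<inter> R) - 1"
        by (auto simp: card_gt_0_iff card_Diff_singleton)
      then show ?thesis by simp
    qed
    have "sum cz ?A = a + card (?A \<inter> (R - {k2}))" using b0 s cA by (simp add: blkok_def)
    moreover have "k \<notin> R - {k2}" if k: "k \<in> ?A" "cz k \<noteq> 0" "\<forall>k'\<in>{0<..<k}. cz k' = 0" for k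
    proof -
      have "k2 \<le> k" using kp(2) k(2) .
      moreover have "\<not> k2 < k"
      proof
        assume "k2 < k"
        then have "k2 \<in> {0<..<k}" using kp k1_pos by simp
        from bspec[OF k(3) this] show False using kp(1) by simp
      qed
      ultimately show ?thesis by simp
    qed
    ultimately show ?thesis unfolding blkok_def by blast
  qed
  have "IGw (a # r) cz (R - {k2}) i"
    unfolding IGw_def
  proof (intro conjI allI impI)
    show "i 0 = 0" by (rule i0)
    fix j assume j: "j < length (a # r)"
    then show "i j < i (Suc j)" using st by simp
    show "blkok cz (R - {k2}) ((a # r) ! j) (i j) (i (Suc j))"
    proof (cases j)
      case 0 then show ?thesis using b0' i0 by simp
    next
      case (Suc j')
      have "blkok cz (R - {k2}) ((a # r) ! j) (i j) (i (Suc j)) = blkok c R ((a # r) ! j) (i j) (i (Suc j))"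
      proof (rule blkok_cong)
        fix x assume "x \<in> {i j<..i (Suc j)}"
        then have "i 1 < x" using later_gt[OF w, of j] j Suc by simp
        then show "cz x = c x" by (rule gt1)
        show "x \<in> R - {k2} \<longleftrightarrow> x \<in> R" using \<open>i 1 < x\<close> k2b by auto
      qed
      then show ?thesis using bl j by simp
    qed
  next
    fix k assume k: "i (length (a # r)) < k"
    then show "cz k = 0" using bey cz_zero by simp
  qed
  moreover have "R - {k2} \<subseteq> supp cz"
  proof
    fix x assume x: "x \<in> R - {k2}"
    then have "x \<noteq> k1" using kR by blast
    then have "cz x = c x" by (rule cz_eq)
    moreover have "c x \<noteq> 0" using Rs x by (auto simp: supp_def)
    ultimately show "x \<in> supp cz" by (simp add: supp_def)
  qed
  ultimately show ?thesis by (auto simp: IG_def)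
qed

lemma B2b:
  assumes p: "pos (a # r)" and c1: "c k1 = 1" and g: "IG (a # r) cz R"
  shows "IG (a # r) c (insert k2 R)" "k2 \<notin> R" "supp cz \<noteq> {}"
proof -
  obtain i where w: "IGw (a # r) cz R i" and Rs: "R \<subseteq> supp cz" using g by (auto simp: IG_def)
  have i0: "i 0 = 0" and st: "\<forall>j<length (a#r). i j < i (Suc j)" and bey: "\<forall>k. i (length (a#r)) < k \<longrightarrow> cz k = 0"
    and bl: "\<forall>j<length (a#r). blkok cz R ((a#r) ! j) (i j) (i (Suc j))" using w by (auto simp: IGw_def)
  have b0: "blkok cz R a 0 (i 1)" using bl[rule_format, of 0] i0 by simp
  have apos: "0 < a" using p by (simp add: pos_def)
  obtain x where x: "x \<in> {0<..i 1}" "cz x \<noteq> 0" using blk_nonzero[OF b0 apos] by blast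
  then show ne: "supp cz \<noteq> {}" by (auto simp: supp_def)
  note kp = k2_props[OF ne]
  show k2R: "k2 \<notin> R" using min_black[OF cz0 w kp(1) kp(2)] .
  have k2b: "k2 \<in> {0<..i 1}" using first_in_blk0[OF w apos kp(2)] kp k1_pos by simp
  have kb: "k1 \<in> {0<..i 1}" using k2b kp k1_pos by simp
  have kR: "k1 \<notin> R" using Rs by (auto simp: supp_def cz_def)
  have gt1: "i 1 < x \<Longrightarrow> c x = cz x" for x using kb cz_eq[of x] by simp
  let ?A = "{0<..i 1}"
  have b0': "blkok c (insert k2 R) a 0 (i 1)"
  proof -
    have s: "sum c ?A = sum cz ?A + 1" using sum_cz[of ?A] kb c1 by simp
    have cA: "card (?A \<inter> insert k2 R) = card (?A \<inter> R) + 1"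
    proof -
      have "?A \<inter> insert k2 R = insert k2 (?A \<inter> R)" using k2b by blast
      then show ?thesis using k2R by simp
    qed
    have "sum c ?A = a + card (?A \<inter> insert k2 R)" using b0 s cA by (simp add: blkok_def)
    moreover have "k \<notin> insert k2 R" if k: "k \<in> ?A" "c k \<noteq> 0" "\<forall>k'\<in>{0<..<k}. c k' = 0" for k
    proof -
      have "k = k1"
      proof (rule ccontr)
        assume "k \<noteq> k1"
        then have "k1 < k" using k1_min[of k] k(2) by simp
        then have "k1 \<in> {0<..<k}" using k1_pos by simp
        then have "c k1 = 0" using k(3) by blast
        then show False using k1_supp by simp
      qed
      then show ?thesis using kR kp by simp
    qed
    ultimately show ?thesis unfolding blkok_def by blast
  qed
  have "IGw (a # r) c (insert k2 R) i"
    unfolding IGw_def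
  proof (intro conjI allI impI)
    show "i 0 = 0" by (rule i0)
    fix j assume j: "j < length (a # r)"
    then show "i j < i (Suc j)" using st by simp
    show "blkok c (insert k2 R) ((a # r) ! j) (i j) (i (Suc j))"
    proof (cases j)
      case 0 then show ?thesis using b0' i0 by simp
    next
      case (Suc j')
      have "blkok c (insert k2 R) ((a # r) ! j) (i j) (i (Suc j)) = blkok cz R ((a # r) ! j) (i j) (i (Suc j))"
      proof (rule blkok_cong)
        fix x assume "x \<in> {i j<..i (Suc j)}"
        then have "i 1 < x" using later_gt[OF w, of j] j Suc by simp
        then show "c x = cz x" by (rule gt1)
        show "x \<in> insert k2 R \<longleftrightarrow> x \<in> R" using \<open>i 1 < x\<close> k2b by auto
      qed
      then show ?thesis using bl j by simp
    qed
  next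
    fix k assume k: "i (length (a # r)) < k"
    then have "i 1 < k" using later_gt[OF w, of "length (a#r)"] by simp
    then show "c k = 0" using bey k gt1[of k] by simp
  qed
  moreover have "insert k2 R \<subseteq> supp c" using Rs kp czs by (auto simp: supp_def)
  ultimately show "IG (a # r) c (insert k2 R)" by (auto simp: IG_def)
qed

lemma black_dec:
  assumes g: "IG \<alpha> cz R" and ne: "supp cz \<noteq> {}"
  shows "k2 \<notin> R"
proof -
  obtain i where w: "IGw \<alpha> cz R i" using g by (auto simp: IG_def)
  note kp = k2_props[OF ne]
  show ?thesis using min_black[OF cz0 w kp(1) kp(2)] .
qed

lemma Gl_1:
  assumes p: "pos (a # r)" and c1: "c k1 = 1"
  shows "Gl (a # r) c = Gl (dec (a # r)) cz \<union> insert k2 ` Gl (a # r) cz"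
proof
  show "Gl (a # r) c \<subseteq> Gl (dec (a # r)) cz \<union> insert k2 ` Gl (a # r) cz"
  proof
    fix R assume R: "R \<in> Gl (a # r) c"
    show "R \<in> Gl (dec (a # r)) cz \<union> insert k2 ` Gl (a # r) cz"
    proof (cases "supp cz \<noteq> {} \<and> k2 \<in> R")
      case True
      then have "R - {k2} \<in> Gl (a # r) cz" using B2f[OF p c1] R by (simp add: Gl_def)
      moreover have "R = insert k2 (R - {k2})" using True by blast
      ultimately show ?thesis by blast
    next
      case False
      have "IG (dec (a # r)) cz R" by (rule B1f[OF p c1]) (use R False in \<open>auto simp: Gl_def\<close>)
      then have "R \<in> Gl (dec (a # r)) cz" unfolding Gl_def by (rule CollectI)
      then show ?thesis by (rule UnI1)
    qed
  qed
next
  show "Gl (dec (a # r)) cz \<union> insert k2 ` Gl (a # r) cz \<subseteq> Gl (a # r) c"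
    using B1b[OF p c1] B2b(1)[OF p c1] by (auto simp: Gl_def)
qed

lemma card_Gl_1:
  assumes p: "pos (a # r)" and c1: "c k1 = 1"
  shows "card (Gl (a # r) c) = card (Gl (dec (a # r)) cz) + card (Gl (a # r) cz)"
proof -
  have inj: "inj_on (insert k2) (Gl (a # r) cz)"
  proof (rule inj_onI)
    fix x y assume x: "x \<in> Gl (a # r) cz" and y: "y \<in> Gl (a # r) cz" and e: "insert k2 x = insert k2 y"
    have "k2 \<notin> x" "k2 \<notin> y" using B2b(2)[OF p c1] x y by (auto simp: Gl_def)
    then show "x = y" using e by (metis insert_ident)
  qed
  have disj: "Gl (dec (a # r)) cz \<inter> insert k2 ` Gl (a # r) cz = {}"
  proof (rule equals0I)
    fix z assume z: "z \<in> Gl (dec (a # r)) cz \<inter> insert k2 ` Gl (a # r) cz"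
    then obtain R where R: "R \<in> Gl (a # r) cz" "z = insert k2 R" by blast
    have ne: "supp cz \<noteq> {}" using B2b(3)[OF p c1] R by (simp add: Gl_def)
    have "k2 \<notin> z" using black_dec[OF _ ne, of "dec (a # r)" z] z by (simp add: Gl_def)
    then show False using R by simp
  qed
  show ?thesis unfolding Gl_1[OF p c1]
    using card_Un_disjoint[OF finite_Gl[OF fin_cz] finite_imageI[OF finite_Gl[OF fin_cz]] disj]
      card_image[OF inj] by simp
qed

end

definition mu :: "(nat \<Rightarrow> nat) \<Rightarrow> nat" where "mu c = sum c (supp c)"

lemma mu_less:
  assumes f: "finite (supp c)" and le: "\<And>x. c' x \<le> c x" and lt: "c' p < c p"
  shows "mu c' < mu c"
proof -
  have ss: "supp c' \<subseteq> supp c"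
  proof
    fix x assume "x \<in> supp c'"
    then have "c' x \<noteq> 0" by (simp add: supp_def)
    then have "c x \<noteq> 0" using le[of x] by simp
    then show "x \<in> supp c" by (simp add: supp_def)
  qed
  have "mu c' = sum c' (supp c)"
    unfolding mu_def by (rule sum.mono_neutral_left[OF f ss]) (auto simp: supp_def)
  also have "\<dots> < sum c (supp c)"
  proof (rule sum_strict_mono_ex1[OF f])
    show "\<forall>x\<in>supp c. c' x \<le> c x" using le by simp
    show "\<exists>a\<in>supp c. c' a < c a" using lt by (intro bexI[of _ p]) (auto simp: supp_def)
  qed
  finally show ?thesis by (simp add: mu_def)
qed

lemma Gl_Nil: "c 0 = 0 \<Longrightarrow> Gl [] c = (if supp c = {} then {{}} else {})"
proof -
  assume c0: "c 0 = 0"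
  have "IG [] c R \<longleftrightarrow> supp c = {} \<and> R = {}" for R
  proof
    assume "IG [] c R"
    then obtain i where "IGw [] c R i" "R \<subseteq> supp c" by (auto simp: IG_def)
    then have "\<forall>k. 0 < k \<longrightarrow> c k = 0" "R \<subseteq> supp c" by (auto simp: IGw_def)
    then have "supp c = {}" using c0 by (auto simp: supp_def) (metis neq0_conv)
    then show "supp c = {} \<and> R = {}" using \<open>R \<subseteq> supp c\<close> by simp
  next
    assume a: "supp c = {} \<and> R = {}"
    then have "IGw [] c R (\<lambda>_. 0)" by (auto simp: IGw_def supp_def)
    then show "IG [] c R" using a by (auto simp: IG_def)
  qed
  then show ?thesis by (auto simp: Gl_def)
qed

lemma Gl_zero: "pos (a # r) \<Longrightarrow> supp c = {} \<Longrightarrow> Gl (a # r) c = {}"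
proof -
  assume p: "pos (a # r)" and s: "supp c = {}"
  have "\<not> IG (a # r) c R" for R
  proof
    assume "IG (a # r) c R"
    then obtain i where "IGw (a # r) c R i" by (auto simp: IG_def)
    then have "blkok c R a (i 0) (i 1)" by (auto simp: IGw_def)
    moreover have "0 < a" using p by (simp add: pos_def)
    ultimately obtain x where "c x \<noteq> 0" using blk_nonzero by blast
    then show False using s by (auto simp: supp_def)
  qed
  then show ?thesis by (auto simp: Gl_def)
qed

lemma main_eq:
  "pos \<alpha> \<Longrightarrow> finite (supp c) \<Longrightarrow> c 0 = 0 \<Longrightarrow> card (Tset \<alpha> c) = card (Gl \<alpha> c)"
proof (induction "mu c" arbitrary: \<alpha> c rule: less_induct)
  case less
  note p = less.prems(1) and f = less.prems(2) and c0 = less.prems(3)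
  show ?case
  proof (cases "supp c = {}")
    case True
    then have cz: "c = (\<lambda>_. 0)" by (auto simp: supp_def fun_eq_iff)
    show ?thesis
    proof (cases \<alpha>)
      case Nil
      then show ?thesis using cz Tset_Nil Gl_Nil[of c, OF c0] True by simp
    next
      case (Cons a r)
      then show ?thesis using Tset_zero[OF p] Gl_zero[of a r c] p True cz by simp
    qed
  next
    case False
    interpret K1 c using c0 f False by unfold_locales
    show ?thesis
    proof (cases \<alpha>)
      case Nil
      have "c \<noteq> (\<lambda>_. 0)" using False by (auto simp: supp_def)
      then show ?thesis using Nil Tset_Nil Gl_Nil[of c, OF c0] False by simp
    next
      case (Cons a r)
      have pa: "pos (a # r)" using p Cons by simp
      show ?thesis
      proof (cases "2 \<le> c k1")
        case True
        show ?thesis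
        proof (cases "a = 1")
          case True
          then show ?thesis using card_Tset_ge2[OF pa \<open>2 \<le> c k1\<close>] card_Gl_ge2[OF pa \<open>2 \<le> c k1\<close>] Cons by simp
        next
          case False
          have "mu cm < mu c" using mu_less[OF f, of cm k1] \<open>2 \<le> c k1\<close> by (auto simp: cm_def)
          moreover have "pos ((a - 1) # r)" using pa False by (auto simp: pos_def)
          moreover have "finite (supp cm)" using f by (rule finite_subset[rotated]) (auto simp: supp_def cm_def)
          moreover have "cm 0 = 0" using c0 k1_pos by (simp add: cm_def)
          ultimately have "card (Tset ((a - 1) # r) cm) = card (Gl ((a - 1) # r) cm)" using less.hyps by blast
          then show ?thesis using card_Tset_ge2[OF pa \<open>2 \<le> c k1\<close>] card_Gl_ge2[OF pa \<open>2 \<le> c k1\<close>] Cons False by simp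
        qed
      next
        case False
        then have c1: "c k1 = 1" using k1_supp by simp
        have m: "mu cz < mu c" using mu_less[OF f, of cz k1] c1 by (auto simp: cz_def)
        have "card (Tset (dec (a # r)) cz) = card (Gl (dec (a # r)) cz)"
          using less.hyps[OF m pos_dec[OF pa] fin_cz cz0] .
        moreover have "card (Tset (a # r) cz) = card (Gl (a # r) cz)"
          using less.hyps[OF m pa fin_cz cz0] .
        ultimately show ?thesis using card_Tset_1[OF pa c1] card_Gl_1[OF pa c1] Cons by simp
      qed
    qed
  qed
qed

definition mkb :: "(nat \<Rightarrow> nat) \<Rightarrow> nat \<Rightarrow> nat set \<Rightarrow> (nat \<times> bool) list" where
  "mkb c L R = map (\<lambda>k. (c (Suc k), Suc k \<in> R)) [0..<L]"

lemma mkb_len[simp]: "length (mkb c L R) = L" by (simp add: mkb_def)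
lemma mkb_bval: "1 \<le> k \<Longrightarrow> k \<le> L \<Longrightarrow> bval (mkb c L R) k = c k"
  by (cases k) (auto simp: mkb_def bval_def)
lemma mkb_bred: "1 \<le> k \<Longrightarrow> k \<le> L \<Longrightarrow> bred (mkb c L R) k \<longleftrightarrow> k \<in> R"
  by (cases k) (auto simp: mkb_def bred_def)

lemma flat_rep: "flat (replicate m 0 @ a) = flat a" by (simp add: flat_def)

lemma nzpos_len: "length (nzpos a) = length (flat a)"
proof -
  let ?f = "\<lambda>k. a ! (k - 1)"
  have e: "map ?f [1..<length a + 1] = a"
    by (rule nth_equalityI) (simp_all del: upt_Suc)
  have "length (filter (\<lambda>x. x \<noteq> 0) a) = length (filter (\<lambda>x. x \<noteq> 0) (map ?f [1..<length a + 1]))"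
    using e by simp
  also have "\<dots> = length (nzpos a)" by (simp add: nzpos_def filter_map o_def)
  finally show ?thesis by (simp add: flat_def)
qed

lemma nzpos_mem: "k \<in> set (nzpos a) \<Longrightarrow> 1 \<le> k \<and> k \<le> length a \<and> a ! (k - 1) \<noteq> 0"
  unfolding nzpos_def by (simp del: upt_Suc)

lemma nzpos_bounds:
  assumes j: "j < length (flat a)"
  shows "m + 1 \<le> nzpos (replicate m 0 @ a) ! j" "nzpos (replicate m 0 @ a) ! j \<le> m + length a"
proof -
  let ?a = "replicate m 0 @ a"
  have jl: "j < length (nzpos ?a)" using j nzpos_len[of ?a] flat_rep by simp
  then have mem: "nzpos ?a ! j \<in> set (nzpos ?a)" by simp
  then have k: "1 \<le> nzpos ?a ! j" "nzpos ?a ! j \<le> length ?a" "?a ! (nzpos ?a ! j - 1) \<noteq> 0"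
    using nzpos_mem by blast+
  show "nzpos ?a ! j \<le> m + length a" using k by simp
  show "m + 1 \<le> nzpos ?a ! j"
  proof (rule ccontr)
    assume "\<not> m + 1 \<le> nzpos ?a ! j"
    then have "nzpos ?a ! j - 1 < m" using k by simp
    then have "?a ! (nzpos ?a ! j - 1) = 0" by (simp add: nth_append)
    with k show False by simp
  qed
qed

lemma blk_conv:
  assumes e: "\<And>k. k \<in> {lo<..hi} \<Longrightarrow> bval b k = c k \<and> (bred b k \<longleftrightarrow> k \<in> R)" and Rs: "R \<subseteq> supp c"
  shows "((\<Sum>k\<in>{lo<..hi}. bval b k) = v + card {k\<in>{lo<..hi}. bval b k \<noteq> 0 \<and> bred b k} \<and>
          (\<forall>k\<in>{lo<..hi}. bval b k \<noteq> 0 \<and> (\<forall>k'\<in>{lo<..<k}. bval b k' = 0) \<longrightarrow> \<not> bred b k))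
       \<longleftrightarrow> blkok c R v lo hi"
proof -
  have s: "(\<Sum>k\<in>{lo<..hi}. bval b k) = (\<Sum>k\<in>{lo<..hi}. c k)" using e by (intro sum.cong) auto
  have cd: "{k\<in>{lo<..hi}. bval b k \<noteq> 0 \<and> bred b k} = {lo<..hi} \<inter> R"
    using e Rs by (auto simp: supp_def)
  have b: "(\<forall>k\<in>{lo<..hi}. bval b k \<noteq> 0 \<and> (\<forall>k'\<in>{lo<..<k}. bval b k' = 0) \<longrightarrow> \<not> bred b k) \<longleftrightarrow>
           (\<forall>k\<in>{lo<..hi}. c k \<noteq> 0 \<and> (\<forall>k'\<in>{lo<..<k}. c k' = 0) \<longrightarrow> k \<notin> R)"
  proof -
    have "\<And>k k'. k \<in> {lo<..hi} \<Longrightarrow> k' \<in> {lo<..<k} \<Longrightarrow> bval b k' = c k'" using e by auto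
    then show ?thesis using e by (metis greaterThanAtMost_iff)
  qed
  show ?thesis unfolding blkok_def s cd b ..
qed

lemma blkok_shrink:
  assumes m: "lo \<le> hi'" "hi' \<le> hi" and z: "\<And>x. x \<in> {hi'<..hi} \<Longrightarrow> c x = 0" and R: "R \<subseteq> supp c"
    and b: "blkok c R v lo hi"
  shows "blkok c R v lo hi'"
proof -
  have s: "sum c {lo<..hi} = sum c {lo<..hi'}"
    using sum_split_ivl[OF m, of c] z by simp
  have "x \<le> hi'" if "x \<in> R" "x \<le> hi" for x
    using z[of x] R that by (cases "x \<le> hi'") (auto simp: supp_def)
  then have cd: "{lo<..hi} \<inter> R = {lo<..hi'} \<inter> R" using m by auto
  show ?thesis using b m unfolding blkok_def s cd by auto
qed

lemma glide_unfold:
  "is_glide a' b \<longleftrightarrow> is_wkomp b \<and> length b = length a' \<and>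
    (\<exists>i :: nat \<Rightarrow> nat. i 0 = 0 \<and> (\<forall>j<length (flat a'). i j < i (Suc j)) \<and>
       (\<forall>j\<in>{1..length (flat a')}. i j \<le> nzpos a' ! (j - 1)) \<and>
       (\<forall>k. i (length (flat a')) < k \<and> k \<le> length b \<longrightarrow> bval b k = 0) \<and>
       (\<forall>j\<in>{1..length (flat a')}.
          (\<Sum>k\<in>{i (j - 1)<..i j}. bval b k)
            = flat a' ! (j - 1) + card {k\<in>{i (j - 1)<..i j}. bval b k \<noteq> 0 \<and> bred b k} \<and>
          (\<forall>k\<in>{i (j - 1)<..i j}. bval b k \<noteq> 0 \<and> (\<forall>k'\<in>{i (j - 1)<..<k}. bval b k' = 0)
               \<longrightarrow> \<not> bred b k)))"
  unfolding is_glide_def Let_def ..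

lemma pos_flat: "pos (flat a)" by (simp add: pos_def flat_def)

lemma glide_iff:
  assumes c0: "c 0 = 0" and cM: "\<And>k. M < k \<Longrightarrow> c k = 0" and mM: "M \<le> m" and Rs: "R \<subseteq> supp c"
  shows "is_glide (replicate m 0 @ a) (mkb c (m + length a) R) \<longleftrightarrow> IG (flat a) c R"
proof -
  let ?a = "replicate m 0 @ a" and ?L = "m + length a"
  let ?b = "mkb c ?L R"
  let ?l = "length (flat a)"
  have bv: "\<And>k. 1 \<le> k \<Longrightarrow> k \<le> ?L \<Longrightarrow> bval ?b k = c k" by (rule mkb_bval)
  have br: "\<And>k. 1 \<le> k \<Longrightarrow> k \<le> ?L \<Longrightarrow> bred ?b k \<longleftrightarrow> k \<in> R" by (rule mkb_bred)
  have wk: "is_wkomp ?b"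
    unfolding is_wkomp_def
  proof (intro allI impI)
    fix k assume "k < length ?b" "fst (?b ! k) = 0"
    then show "\<not> snd (?b ! k)" using Rs by (auto simp: mkb_def supp_def)
  qed
  have fa: "flat ?a = flat a" by (rule flat_rep)
  have hML: "M \<le> ?L" using mM by simp
  show ?thesis
  proof
    assume g: "is_glide ?a ?b"
    then obtain i where i0: "i 0 = 0" and st: "\<forall>j<?l. i j < i (Suc j)"
      and ib: "\<forall>j\<in>{1..?l}. i j \<le> nzpos ?a ! (j - 1)"
      and bey: "\<forall>k. i ?l < k \<and> k \<le> length ?b \<longrightarrow> bval ?b k = 0"
      and bl: "\<forall>j\<in>{1..?l}.
          (\<Sum>k\<in>{i (j - 1)<..i j}. bval ?b k)
            = flat a ! (j - 1) + card {k\<in>{i (j - 1)<..i j}. bval ?b k \<noteq> 0 \<and> bred ?b k} \<and>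
          (\<forall>k\<in>{i (j - 1)<..i j}. bval ?b k \<noteq> 0 \<and> (\<forall>k'\<in>{i (j - 1)<..<k}. bval ?b k' = 0)
               \<longrightarrow> \<not> bred ?b k)"
      unfolding glide_unfold fa by blast
    have il: "i ?l \<le> ?L"
    proof (cases "?l = 0")
      case True then show ?thesis using i0 by simp
    next
      case False
      then have "?l \<in> {1..?l}" by (simp add: Suc_le_eq)
      then have "i ?l \<le> nzpos ?a ! (?l - 1)" using ib by blast
      also have "\<dots> \<le> ?L" using nzpos_bounds(2)[of "?l - 1" a m] False by simp
      finally show ?thesis .
    qed
    have "IGw (flat a) c R i"
      unfolding IGw_def
    proof (intro conjI allI impI)
      show "i 0 = 0" by (rule i0)
      fix j assume j: "j < ?l"
      then show "i j < i (Suc j)" using st by simp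
      have hi: "i (Suc j) \<le> i ?l" using i_mono[OF st, of "Suc j" ?l] j by simp
      have e: "bval ?b k = c k \<and> (bred ?b k \<longleftrightarrow> k \<in> R)" if k: "k \<in> {i j<..i (Suc j)}" for k
      proof -
        have "1 \<le> k" "k \<le> ?L" using k hi il by auto
        then show ?thesis using bv br by simp
      qed
      have "Suc j \<in> {1..?l}" using j by simp
      then have "(\<Sum>k\<in>{i j<..i (Suc j)}. bval ?b k)
            = flat a ! j + card {k\<in>{i j<..i (Suc j)}. bval ?b k \<noteq> 0 \<and> bred ?b k} \<and>
          (\<forall>k\<in>{i j<..i (Suc j)}. bval ?b k \<noteq> 0 \<and> (\<forall>k'\<in>{i j<..<k}. bval ?b k' = 0)
               \<longrightarrow> \<not> bred ?b k)" using bl by fastforce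
      then show "blkok c R (flat a ! j) (i j) (i (Suc j))" using blk_conv[OF e Rs] by blast
    next
      fix k assume k: "i ?l < k"
      show "c k = 0"
      proof (cases "k \<le> ?L")
        case True
        then have "bval ?b k = 0" using bey k by simp
        moreover have "1 \<le> k" using k by simp
        ultimately show ?thesis using bv True by simp
      next
        case False
        then show ?thesis using cM hML by simp
      qed
    qed
    then show "IG (flat a) c R" using Rs by (auto simp: IG_def)
  next
    assume "IG (flat a) c R"
    then obtain i where w: "IGw (flat a) c R i" by (auto simp: IG_def)
    have i0: "i 0 = 0" and st: "\<forall>j<?l. i j < i (Suc j)" and bey: "\<forall>k. i ?l < k \<longrightarrow> c k = 0"
      and bl: "\<forall>j<?l. blkok c R (flat a ! j) (i j) (i (Suc j))" using w by (auto simp: IGw_def)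
    have ltM: "i j < M" if j: "j < ?l" for j
    proof -
      have "flat a ! j \<in> set (flat a)" using j by simp
      then have "0 < flat a ! j" using pos_flat[of a] by (simp add: pos_def)
      then obtain x where x: "x \<in> {i j<..i (Suc j)}" "c x \<noteq> 0" using blk_nonzero bl j by blast
      then have "x \<le> M" using cM by (meson not_le)
      then show ?thesis using x by simp
    qed
    define i' where "i' = (\<lambda>j. if j = ?l then min (i ?l) M else i j)"
    have i'0: "i' 0 = 0" using i0 by (simp add: i'_def)
    have i'M: "i' j \<le> M" if "j \<le> ?l" for j
      using that ltM[of j] by (cases "j = ?l") (auto simp: i'_def)
    have st': "\<forall>j<?l. i' j < i' (Suc j)"
    proof (intro allI impI)
      fix j assume j: "j < ?l"
      show "i' j < i' (Suc j)"
      proof (cases "Suc j = ?l")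
        case True
        have "i j < i (Suc j)" using j st by simp
        then show ?thesis using True ltM[OF j] by (simp add: i'_def)
      next
        case False
        then show ?thesis using j st by (simp add: i'_def)
      qed
    qed
    have ib: "\<forall>j\<in>{1..?l}. i' j \<le> nzpos ?a ! (j - 1)"
    proof
      fix j assume j: "j \<in> {1..?l}"
      have jl: "j - 1 < ?l" using j by auto
      have "i' j \<le> M" using i'M j by simp
      also have "M < m + 1" using mM by simp
      also have "m + 1 \<le> nzpos ?a ! (j - 1)" using nzpos_bounds(1)[of "j - 1" a m] jl by simp
      finally show "i' j \<le> nzpos ?a ! (j - 1)" by simp
    qed
    have bey': "\<forall>k. i' ?l < k \<and> k \<le> length ?b \<longrightarrow> bval ?b k = 0"
    proof (intro allI impI)
      fix k assume k: "i' ?l < k \<and> k \<le> length ?b"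
      then have "1 \<le> k" "k \<le> ?L" by auto
      then have "bval ?b k = c k" using bv by simp
      moreover have "c k = 0"
      proof (cases "i ?l < k")
        case True then show ?thesis using bey by simp
      next
        case False then have "M < k" using k by (auto simp: i'_def min_def split: if_splits)
        then show ?thesis using cM by simp
      qed
      ultimately show "bval ?b k = 0" by simp
    qed
    have bl': "\<forall>j\<in>{1..?l}.
          (\<Sum>k\<in>{i' (j - 1)<..i' j}. bval ?b k)
            = flat a ! (j - 1) + card {k\<in>{i' (j - 1)<..i' j}. bval ?b k \<noteq> 0 \<and> bred ?b k} \<and>
          (\<forall>k\<in>{i' (j - 1)<..i' j}. bval ?b k \<noteq> 0 \<and> (\<forall>k'\<in>{i' (j - 1)<..<k}. bval ?b k' = 0)
               \<longrightarrow> \<not> bred ?b k)"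
    proof
      fix j assume j: "j \<in> {1..?l}"
      then obtain j0 where j0: "j = Suc j0" "j0 < ?l" by (cases j) auto
      have ij0: "i' j0 = i j0" using j0 by (simp add: i'_def)
      have bk: "blkok c R (flat a ! j0) (i j0) (i' (Suc j0))"
      proof (cases "Suc j0 = ?l")
        case True
        have "blkok c R (flat a ! j0) (i j0) (i (Suc j0))" using bl j0 by simp
        moreover have "i j0 < i (Suc j0)" using st j0 by simp
        then have "i j0 \<le> min (i ?l) M" using ltM[of j0] j0 True by simp
        moreover have "\<And>x. x \<in> {min (i ?l) M<..i ?l} \<Longrightarrow> c x = 0" using cM by auto
        ultimately have "blkok c R (flat a ! j0) (i j0) (min (i ?l) M)"
          using blkok_shrink[of "i j0" "min (i ?l) M" "i ?l" c R] Rs True by simp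
        then show ?thesis using True by (simp add: i'_def)
      next
        case False
        then show ?thesis using bl j0 by (simp add: i'_def)
      qed
      have e: "bval ?b k = c k \<and> (bred ?b k \<longleftrightarrow> k \<in> R)" if k: "k \<in> {i j0<..i' (Suc j0)}" for k
      proof -
        have "i' (Suc j0) \<le> M" using i'M j0 by simp
        then have "1 \<le> k" "k \<le> ?L" using k hML by auto
        then show ?thesis using bv br by simp
      qed
      show "(\<Sum>k\<in>{i' (j - 1)<..i' j}. bval ?b k)
            = flat a ! (j - 1) + card {k\<in>{i' (j - 1)<..i' j}. bval ?b k \<noteq> 0 \<and> bred ?b k} \<and>
          (\<forall>k\<in>{i' (j - 1)<..i' j}. bval ?b k \<noteq> 0 \<and> (\<forall>k'\<in>{i' (j - 1)<..<k}. bval ?b k' = 0)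
               \<longrightarrow> \<not> bred ?b k)"
        using blk_conv[OF e Rs] bk j0 ij0 by simp
    qed
    show "is_glide ?a ?b" unfolding glide_unfold fa
      using wk i'0 st' ib bey' bl' by (intro conjI exI[of _ i']) simp_all
  qed
qed

theorem mainTheorem6:
  fixes a :: "nat list" and c :: "nat \<Rightarrow> nat"
  assumes "\<exists>x\<in>set a. x \<noteq> 0"
    and "finite {k. c k \<noteq> 0}"
  shows "\<exists>M. \<forall>m\<ge>M. glide_coeff (1::nat) (replicate m 0 @ a) c = Ltilde_coeff (flat a) c"
proof (cases "c 0 = 0")
  case False
  have g: "glide_coeff (1::nat) (replicate m 0 @ a) c = 0" for m
  proof -
    have e: "{b. is_glide (replicate m 0 @ a) b \<and> mono_of b = c} = {}"
    proof (rule equals0I)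
      fix b assume "b \<in> {b. is_glide (replicate m 0 @ a) b \<and> mono_of b = c}"
      then have "mono_of b 0 = c 0" by auto
      then show False using False by (simp add: mono_of_def)
    qed
    show ?thesis unfolding glide_coeff_def e by simp
  qed
  have l: "Ltilde_coeff (flat a) c = 0"
  proof -
    have e: "{\<sigma>\<in>Atilde (flat a). wt \<sigma> = c} = {}"
    proof (rule equals0I)
      fix \<sigma> assume s: "\<sigma> \<in> {\<sigma>\<in>Atilde (flat a). wt \<sigma> = c}"
      then have A: "\<sigma> \<in> Atilde (flat a)" and w: "wt \<sigma> = c" by auto
      have "0 < wt \<sigma> 0" using False w by simp
      then obtain S where S: "S \<in> set \<sigma>" "0 \<in> S" using wt_pos_iff by blast
      then obtain j where "j < length \<sigma>" "\<sigma> ! j = S" by (auto simp: in_set_conv_nth)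
      then have "good S" using Atilde_good[OF A] by blast
      then show False using S by (simp add: good_def)
    qed
    show ?thesis unfolding Ltilde_coeff_def e by simp
  qed
  show ?thesis using g l by simp
next
  case True
  note c0 = True
  have f: "finite (supp c)" using assms(2) by (simp add: supp_def)
  obtain M where M: "\<And>k. k \<in> supp c \<Longrightarrow> k \<le> M" using finite_nat_set_iff_bounded_le[THEN iffD1, OF f] by blast
  have cM: "c k = 0" if "M < k" for k
  proof (rule ccontr)
    assume "c k \<noteq> 0"
    then have "k \<in> supp c" by (simp add: supp_def)
    then show False using M[of k] that by simp
  qed
  have "glide_coeff (1::nat) (replicate m 0 @ a) c = Ltilde_coeff (flat a) c" if mM: "M \<le> m" for m
  proof -
    let ?a = "replicate m 0 @ a" and ?L = "m + length a"
    let ?G = "{b. is_glide ?a b \<and> mono_of b = c}"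
    have gc: "glide_coeff (1::nat) ?a c = card ?G"
      by (simp add: glide_coeff_def)
    have GE: "?G = mkb c ?L ` Gl (flat a) c"
    proof
      show "?G \<subseteq> mkb c ?L ` Gl (flat a) c"
      proof
        fix b assume b: "b \<in> ?G"
        then have g: "is_glide ?a b" and mo: "mono_of b = c" by auto
        have lb0: "length b = length ?a" and wk: "is_wkomp b" using g unfolding glide_unfold by blast+
        have lb: "length b = ?L" using lb0 by simp
        define R where "R = {k. 1 \<le> k \<and> k \<le> ?L \<and> snd (b ! (k - 1))}"
        have bR: "b = mkb c ?L R"
        proof (rule nth_equalityI)
          show "length b = length (mkb c ?L R)" using lb by simp
          fix k assume k: "k < length b"
          have "fst (b ! k) = c (Suc k)"
            using fun_cong[OF mo, of "Suc k"] k lb by (simp add: mono_of_def bval_def)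
          moreover have "snd (b ! k) \<longleftrightarrow> Suc k \<in> R" using k lb by (simp add: R_def)
          ultimately show "b ! k = mkb c ?L R ! k" using k lb by (simp add: mkb_def prod_eq_iff)
        qed
        have Rs: "R \<subseteq> supp c"
        proof
          fix k assume k: "k \<in> R"
          then have k1: "1 \<le> k" "k \<le> ?L" "snd (b ! (k - 1))" by (auto simp: R_def)
          have "k - 1 < length b" using k1 lb by simp
          then have "fst (b ! (k - 1)) \<noteq> 0" using wk k1(3) unfolding is_wkomp_def by blast
          moreover have "mono_of b k = c k" using mo by simp
          ultimately show "k \<in> supp c" using k1 lb by (simp add: mono_of_def bval_def supp_def)
        qed
        have "IG (flat a) c R" using glide_iff[OF c0 cM mM Rs] g bR by simp
        then show "b \<in> mkb c ?L ` Gl (flat a) c" using bR by (auto simp: Gl_def)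
      qed
    next
      show "mkb c ?L ` Gl (flat a) c \<subseteq> ?G"
      proof
        fix b assume "b \<in> mkb c ?L ` Gl (flat a) c"
        then obtain R where R: "IG (flat a) c R" "b = mkb c ?L R" by (auto simp: Gl_def)
        have Rs: "R \<subseteq> supp c" using R by (simp add: IG_def)
        have g: "is_glide ?a b" using glide_iff[OF c0 cM mM Rs] R by simp
        have "mono_of b k = c k" for k
        proof (cases "1 \<le> k \<and> k \<le> ?L")
          case True then show ?thesis using R mkb_bval[of k ?L c R] by (simp add: mono_of_def)
        next
          case False
          then have "k = 0 \<or> ?L < k" by auto
          then show ?thesis using R c0 cM[of k] mM by (auto simp: mono_of_def)
        qed
        then show "b \<in> ?G" using g by auto
      qed
    qed
    have inj: "inj_on (mkb c ?L) (Gl (flat a) c)"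
    proof (rule inj_onI)
      fix R1 R2 assume R1: "R1 \<in> Gl (flat a) c" and R2: "R2 \<in> Gl (flat a) c" and e: "mkb c ?L R1 = mkb c ?L R2"
      have s: "R1 \<subseteq> supp c" "R2 \<subseteq> supp c" using R1 R2 by (auto simp: Gl_def IG_def)
      have rng: "1 \<le> k \<and> k \<le> ?L" if "k \<in> supp c" for k
      proof -
        have "k \<noteq> 0" using that c0 by (cases k) (auto simp: supp_def)
        moreover have "k \<le> M" using M that .
        ultimately show ?thesis using mM by simp
      qed
      show "R1 = R2"
      proof (intro set_eqI iffI)
        fix k assume "k \<in> R1"
        then have r: "1 \<le> k \<and> k \<le> ?L" using s rng by blast
        then show "k \<in> R2" using mkb_bred[of k ?L c R1] mkb_bred[of k ?L c R2] e \<open>k \<in> R1\<close> by simp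
      next
        fix k assume "k \<in> R2"
        then have r: "1 \<le> k \<and> k \<le> ?L" using s rng by blast
        then show "k \<in> R1" using mkb_bred[of k ?L c R1] mkb_bred[of k ?L c R2] e \<open>k \<in> R2\<close> by simp
      qed
    qed
    have "card ?G = card (Gl (flat a) c)" using GE card_image[OF inj] by simp
    also have "\<dots> = card (Tset (flat a) c)" using main_eq[OF pos_flat f c0] by simp
    also have "\<dots> = Ltilde_coeff (flat a) c" by (simp add: Tset_def Ltilde_coeff_def)
    finally show ?thesis using gc by simp
  qed
  then show ?thesis by blast
qed

end
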